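(* Let $N\ge 2$ and, for $\varepsilon\in(0,1)$, let $$\Omega_\varepsilon:=\Big\{(x_1,\dots,x_{N+1})\in\mathbb{R}^{N+1}\,:\,\sum_{i=1}^{N+1}x_i^2=1,\ \cos((1-\varepsilon)\pi)<x_{N+1}\le 1\Big\}\subset\mathbb{S}^N$$ be the spherical cap (geodesic ball of radius $(1-\varepsilon)\pi$ centred at the North Pole). Let $w_{\Omega_\varepsilon}$ be the torsion function of $\Omega_\varepsilon$, i.e. the unique solution of $-\Delta_{\mathbb{S}^N} w=1$ in $\Omega_\varepsilon$, $w=0$ on $\partial\Omega_\varepsilon$, and let $\lambda_1(\Omega_\varepsilon)>0$ be the principal Dirichlet eigenvalue of $-\Delta_{\mathbb{S}^N}$ in $\Omega_\varepsilon$. Then, as $\varepsilon\to0$, $$\|w_{\Omega_\varepsilon}\|_\infty=\frac{1}{\lambda_1(\Omega_\varepsilon)}+O(1).$$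
   Context: $\Delta_{\mathbb{S}^N}$ denotes the Laplace–Beltrami operator on the unit sphere $\mathbb{S}^N\subset\mathbb{R}^{N+1}$. $O(1)$ denotes a quantity bounded in absolute value by a constant independent of $\varepsilon$ for all sufficiently small $\varepsilon>0$. *)

theory Defs
  imports "HOL-Analysis.Analysis"
begin

text \<open>Ambient space R^(N+1) is real^'n with CARD('n) = N+1; the "north pole"
coordinate x_(N+1) is the coordinate x$k for a fixed index k.\<close>

definition C2_on :: "('a::euclidean_space) set \<Rightarrow> ('a \<Rightarrow> real) \<Rightarrow> bool" where
  "C2_on U g \<longleftrightarrow> (\<exists>(g' :: 'a \<Rightarrow> ('a \<Rightarrow>\<^sub>L real)) (g'' :: 'a \<Rightarrow> ('a \<Rightarrow>\<^sub>L ('a \<Rightarrow>\<^sub>L real))).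
      continuous_on U g'' \<and>
      (\<forall>x\<in>U. (g has_derivative blinfun_apply (g' x)) (at x) \<and>
              (g' has_derivative blinfun_apply (g'' x)) (at x)))"

definition eucl_laplacian :: "(real^'n \<Rightarrow> real) \<Rightarrow> real^'n \<Rightarrow> real" where
  "eucl_laplacian g x = (\<Sum>i\<in>UNIV. deriv (deriv (\<lambda>t. g (x + t *\<^sub>R axis i 1))) 0)"

definition hom0_ext :: "(real^'n \<Rightarrow> real) \<Rightarrow> real^'n \<Rightarrow> real" where
  "hom0_ext f y = f (y /\<^sub>R norm y)"

text \<open>Laplace-Beltrami operator on the unit sphere: the Euclidean Laplacian of the
zero-homogeneous extension, evaluated at points of the sphere.\<close>
definition sphere_laplacian :: "(real^'n \<Rightarrow> real) \<Rightarrow> real^'n \<Rightarrow> real" where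
  "sphere_laplacian f x = eucl_laplacian (hom0_ext f) x"

text \<open>Open cone over a subset of the sphere (open in R^(N+1) iff the subset is relatively open).\<close>
definition cone_over :: "(real^'n) set \<Rightarrow> (real^'n) set" where
  "cone_over \<Omega> = {y. y \<noteq> 0 \<and> y /\<^sub>R norm y \<in> \<Omega>}"

text \<open>We normalise u to vanish outside \<Omega> (so solutions are unique as functions).\<close>
definition dirichlet_sol :: "(real^'n) set \<Rightarrow> (real \<Rightarrow> real) \<Rightarrow> (real^'n \<Rightarrow> real) \<Rightarrow> bool" where
  "dirichlet_sol \<Omega> F u \<longleftrightarrow>
     C2_on (cone_over \<Omega>) (hom0_ext u) \<and>
     continuous_on (closure \<Omega>) u \<and>
     (\<forall>x\<in>\<Omega>. - sphere_laplacian u x = F (u x)) \<and>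
     (\<forall>x. x \<notin> \<Omega> \<longrightarrow> u x = 0)"

definition torsion_function :: "(real^'n) set \<Rightarrow> real^'n \<Rightarrow> real" where
  "torsion_function \<Omega> = (THE w. dirichlet_sol \<Omega> (\<lambda>_. 1) w)"

definition sup_norm_on :: "(real^'n) set \<Rightarrow> (real^'n \<Rightarrow> real) \<Rightarrow> real" where
  "sup_norm_on \<Omega> f = (SUP x\<in>\<Omega>. \<bar>f x\<bar>)"

definition dirichlet_eigenvalue :: "(real^'n) set \<Rightarrow> real \<Rightarrow> bool" where
  "dirichlet_eigenvalue \<Omega> mu \<longleftrightarrow>
     (\<exists>u. dirichlet_sol \<Omega> (\<lambda>s. mu * s) u \<and> (\<exists>x\<in>\<Omega>. u x \<noteq> 0))"

definition principal_eigenvalue :: "(real^'n) set \<Rightarrow> real" where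
  "principal_eigenvalue \<Omega> = Inf {mu. dirichlet_eigenvalue \<Omega> mu}"

definition spherical_cap :: "'n \<Rightarrow> real \<Rightarrow> (real^'n) set" where
  "spherical_cap k \<epsilon> = {x. (\<Sum>i\<in>UNIV. (x$i)^2) = 1 \<and> cos ((1 - \<epsilon>) * pi) < x$k \<and> x$k \<le> 1}"

end

theory Submission
  imports Defs
begin

fun ec :: "real \<Rightarrow> real \<Rightarrow> nat \<Rightarrow> real" where
  "ec N l 0 = 0"
| "ec N l (Suc 0) = 2 / N"
| "ec N l (Suc (Suc n)) = (real (Suc n) * (real (Suc n) + N - 1) - l) / ((real (Suc n) + 1) * (real (Suc n) + N / 2)) * ec N l (Suc n)"

lemma ec_rec:
  assumes "n \<ge> 1"
  shows "ec N l (Suc n) = (real n * (real n + N - 1) - l) / ((real n + 1) * (real n + N / 2)) * ec N l n"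
  using assms by (cases n) auto

lemma ec_bounds:
  assumes N: "N \<ge> 2" and l: "0 \<le> l" "l \<le> 1" and n: "n \<ge> 1"
  shows "0 < ec N 0 n \<and> (1 - l + l / n) * ec N 0 n \<le> ec N l n \<and> ec N l n \<le> ec N 0 n"
  using n
proof (induction n rule: nat_induct_at_least)
  case base
  then show ?case using N by simp
next
  case (Suc n)
  define r0 where "r0 = real n * (real n + N - 1) / ((real n + 1) * (real n + N / 2))"
  define a where "a = l / (real n * (real n + N - 1))"
  have n1: "real n \<ge> 1" using Suc by simp
  have pos: "real n * (real n + N - 1) > 0" using n1 N by simp
  have pos2: "(real n + 1) * (real n + N / 2) > 0" using n1 N by simp
  have r0pos: "r0 > 0" unfolding r0_def using pos pos2 by simp
  have "(real n * (real n + N - 1) - l) / ((real n + 1) * (real n + N / 2)) = r0 * (1 - a)"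
  proof -
    have "r0 * a = l / ((real n + 1) * (real n + N / 2))"
    proof -
      have "real n \<noteq> 0" "real n + N - 1 \<noteq> 0" using n1 N by auto
      have gen: "\<And>X D. X \<noteq> 0 \<Longrightarrow> X / D * (l / X) = l / D" by (simp add: field_simps)
      show ?thesis unfolding r0_def a_def by (rule gen) (use pos n1 in auto)
    qed
    then have "r0 * (1 - a) = r0 - l / ((real n + 1) * (real n + N / 2))"
      by (simp add: algebra_simps)
    also have "\<dots> = (real n * (real n + N - 1) - l) / ((real n + 1) * (real n + N / 2))"
      unfolding r0_def by (simp add: diff_divide_distrib)
    finally show ?thesis by simp
  qed
  then have e1: "ec N l (Suc n) = r0 * (1 - a) * ec N l n"
    using ec_rec[OF Suc(1), of N l] by simp
  have e0: "ec N 0 (Suc n) = r0 * ec N 0 n"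
    using ec_rec[OF Suc(1), of N 0] unfolding r0_def by simp
  have a0: "0 \<le> a" unfolding a_def using pos l by simp
  have "real n * (real n + 1) \<le> real n * (real n + N - 1)" using n1 N by simp
  then have a1: "a \<le> l / (real n * (real n + 1))" unfolding a_def
    using l n1 by (intro divide_left_mono) auto
  have "l / (real n * (real n + 1)) \<le> 1 / 2"
  proof -
    have "real n * (real n + 1) \<ge> 1 * 2" using n1
      by (intro mult_mono) auto
    then show ?thesis using l by (simp add: field_simps)
  qed
  then have a2: "a \<le> 1" using a1 by linarith
  define A where "A = 1 - l + l / real n"
  have "l / real n \<ge> 0" using l n1 by simp
  then have A0: "0 \<le> A" unfolding A_def using l by linarith
  have "l / real n \<le> l / 1" using l n1 by (intro divide_left_mono) auto
  then have A1: "A \<le> 1" unfolding A_def by simp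
  from Suc.IH have d0: "0 < ec N 0 n" and lo: "A * ec N 0 n \<le> ec N l n" and up: "ec N l n \<le> ec N 0 n"
    unfolding A_def by auto
  have el0: "0 \<le> ec N l n" using lo A0 d0 by (meson mult_nonneg_nonneg less_imp_le order_trans)
  have "ec N l (Suc n) \<le> r0 * ec N 0 n"
  proof -
    have "(1 - a) * ec N l n \<le> 1 * ec N 0 n"
      using a0 a2 el0 up by (intro mult_mono) auto
    then show ?thesis using e1 r0pos
      by (metis mult.assoc mult_1 mult_le_cancel_left_pos)
  qed
  moreover have "(1 - l + l / real (Suc n)) * ec N 0 (Suc n) \<le> ec N l (Suc n)"
  proof -
    have key: "1 - l + l / real (Suc n) \<le> (1 - a) * A"
    proof -
      have "1 - l + l / real (Suc n) = A - l / (real n * (real n + 1))"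
      proof -
        have "real n > 0" using n1 by simp
        then have "real n * (real n + 1) \<noteq> 0" "real n \<noteq> 0" "real n + 1 \<noteq> 0" by auto
        then have "1 / real n - 1 / (real n * (real n + 1)) = 1 / (real n + 1)"
          by (simp add: field_simps)
        then have "l / real n - l / (real n * (real n + 1)) = l / (real n + 1)"
        proof -
          from \<open>1 / real n - 1 / (real n * (real n + 1)) = 1 / (real n + 1)\<close>
          have "l * (1 / real n - 1 / (real n * (real n + 1))) = l * (1 / (real n + 1))" by simp
          then show ?thesis by (simp add: right_diff_distrib)
        qed
        then show ?thesis unfolding A_def by simp
      qed
      also have "\<dots> \<le> A - a" using a1 by simp
      also have "\<dots> \<le> (1 - a) * A"
      proof -
        have "A * a \<le> 1 * a" using a0 A1 by (intro mult_right_mono) auto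
        then show ?thesis by (simp add: algebra_simps)
      qed
      finally show ?thesis .
    qed
    have "(1 - l + l / real (Suc n)) * ec N 0 (Suc n) = r0 * ((1 - l + l / real (Suc n)) * ec N 0 n)"
      using e0 by simp
    also have "\<dots> \<le> r0 * ((1 - a) * A * ec N 0 n)"
      using key d0 r0pos by (intro mult_left_mono mult_right_mono) auto
    also have "\<dots> \<le> r0 * ((1 - a) * ec N l n)"
      using lo a2 r0pos by (auto simp: mult.assoc intro!: mult_left_mono)
    also have "\<dots> = ec N l (Suc n)" using e1 by simp
    finally show ?thesis .
  qed
  moreover have "0 < ec N 0 (Suc n)" using e0 r0pos d0 by simp
  ultimately show ?case using e0 by simp
qed



lemma d_lower:
  assumes N: "N \<ge> 2" and n: "n \<ge> 1"
  shows "ec N 0 n \<ge> 2 / (N * real n)"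
  using n
proof (induction n rule: nat_induct_at_least)
  case base
  then show ?case by simp
next
  case (Suc n)
  have n1: "real n \<ge> 1" using Suc by simp
  have r: "real n / (real n + 1) \<le> real n * (real n + N - 1) / ((real n + 1) * (real n + N / 2))"
  proof -
    have "real n * (real n + N / 2) \<le> real n * (real n + N - 1)" using N n1 by (intro mult_left_mono) auto
    then have "real n * (real n + N / 2) / ((real n + 1) * (real n + N / 2)) \<le> real n * (real n + N - 1) / ((real n + 1) * (real n + N / 2))"
      using N n1 by (intro divide_right_mono) auto
    moreover have "real n * (real n + N / 2) / ((real n + 1) * (real n + N / 2)) = real n / (real n + 1)"
      using N n1 by simp
    ultimately show ?thesis by simp
  qed
  have aux: "\<And>n::real. n > 0 \<Longrightarrow> N \<noteq> 0 \<Longrightarrow> 2 / (N * (n+1)) = n / (n + 1) * (2 / (N * n))"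
    by simp
  have "2 / (N * real (Suc n)) = real n / (real n + 1) * (2 / (N * real n))"
    using aux[of "real n"] n1 N by (simp add: add.commute)
  also have "\<dots> \<le> real n * (real n + N - 1) / ((real n + 1) * (real n + N / 2)) * ec N 0 n"
    using r Suc.IH N n1 by (intro mult_mono) auto
  also have "\<dots> = ec N 0 (Suc n)" using ec_rec[OF Suc(1), of N 0] by simp
  finally show ?case .
qed

lemma d_ratio:
  assumes N: "N \<ge> 2" and n: "n \<ge> 1"
  shows "ec N 0 (Suc n) \<le> (1 + N / real n) * ec N 0 n"
proof -
  have n1: "real n \<ge> 1" using n by simp
  have d0: "ec N 0 n > 0" using ec_bounds[OF N _ _ n, of 0] by simp
  have "real n * (real n + N - 1) / ((real n + 1) * (real n + N / 2)) \<le> 1 + N / real n"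
  proof -
    have "real n * (real n + N - 1) \<le> (real n + N) * (real n + 1) * (real n + N / 2) / real n"
    proof -
      have "real n * real n * (real n + N - 1) \<le> (real n + 1) * (real n + N / 2) * (real n + N)"
        using N n1 by (intro mult_mono) auto
      then show ?thesis using n1 by (simp add: field_simps)
    qed
    also have "\<dots> = (1 + N / real n) * ((real n + 1) * (real n + N / 2))"
      using n1 by (simp add: field_simps)
    finally show ?thesis using N n1 by (simp add: divide_le_eq)
  qed
  from mult_right_mono[OF this less_imp_le[OF d0]] show ?thesis using ec_rec[OF n, of N 0] by simp
qed

lemma d_summable:
  assumes N: "N \<ge> 2" and r: "0 \<le> r" "r < 1"
  shows "summable (\<lambda>n. ec N 0 n * r ^ n)"
proof -
  obtain M :: nat where M: "real M > 2 * N / (1 - r)" using reals_Archimedean2 by blast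
  have Mpos: "real M > 0" using M N r by (smt (verit) divide_pos_pos)
  show ?thesis
  proof (rule summable_ratio_test[where c = "(1 + r) / 2" and N = M])
    show "(1 + r) / 2 < 1" using r by simp
    fix n assume nM: "M \<le> n"
    then have n1: "n \<ge> 1" using Mpos by simp
    have nn: "real n \<ge> real M" using nM by simp
    have d0: "ec N 0 n > 0" using ec_bounds[OF N _ _ n1, of 0] by simp
    have "N / real n \<le> (1 - r) / 2"
    proof -
      have "N / real n \<le> N / real M" using nn Mpos N by (intro divide_left_mono) auto
      also have "\<dots> \<le> (1 - r) / 2" using M Mpos r N by (simp add: field_simps)
      finally show ?thesis .
    qed
    then have c: "(1 + N / real n) * r \<le> (1 + r) / 2"
    proof -
      have "(1 + N / real n) * r \<le> (1 + (1 - r) / 2) * r"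
        using \<open>N / real n \<le> (1 - r) / 2\<close> r by (intro mult_right_mono) auto
      also have "\<dots> \<le> (1 + r) / 2"
      proof -
        have "0 \<le> (1 - r) * (1 - r)" by simp
        then show ?thesis by (simp add: field_simps)
      qed
      finally show ?thesis .
    qed
    have "norm (ec N 0 (Suc n) * r ^ Suc n) = ec N 0 (Suc n) * r * r ^ n"
      using ec_bounds[OF N _ _, of 0 "Suc n"] r by (simp add: abs_mult)
    also have "\<dots> \<le> (1 + N / real n) * ec N 0 n * r * r ^ n"
      using d_ratio[OF N n1] r by (intro mult_right_mono) auto
    also have "\<dots> = ((1 + N / real n) * r) * (ec N 0 n * r ^ n)" by (simp add: algebra_simps)
    also have "\<dots> \<le> (1 + r) / 2 * (ec N 0 n * r ^ n)"
      using c d0 r by (intro mult_right_mono) auto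
    also have "\<dots> = (1 + r) / 2 * norm (ec N 0 n * r ^ n)" using d0 r by simp
    finally show "norm (ec N 0 (Suc n) * r ^ Suc n) \<le> (1 + r) / 2 * norm (ec N 0 n * r ^ n)" .
  qed
qed

lemma ec_abs_le:
  assumes N: "N \<ge> 2" and l: "0 \<le> l" "l \<le> 1"
  shows "\<bar>ec N l n\<bar> \<le> ec N 0 n"
proof (cases "n = 0")
  case True then show ?thesis by simp
next
  case False
  then have n: "n \<ge> 1" by simp
  from ec_bounds[OF N l n] have "(1 - l + l / n) * ec N 0 n \<le> ec N l n" "ec N l n \<le> ec N 0 n" "0 < ec N 0 n" by auto
  moreover have "0 \<le> 1 - l + l / n" using l by simp
  ultimately have "0 \<le> ec N l n" by (meson mult_nonneg_nonneg less_imp_le order_trans)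
  then show ?thesis using \<open>ec N l n \<le> ec N 0 n\<close> by simp
qed

lemma ec_summable:
  assumes N: "N \<ge> 2" and l: "0 \<le> l" "l \<le> 1" and x: "\<bar>x\<bar> < 1"
  shows "summable (\<lambda>n. ec N l n * x ^ n)"
proof (rule summable_comparison_test[OF _ d_summable[OF N, of "\<bar>x\<bar>"]])
  show "\<exists>M. \<forall>n\<ge>M. norm (ec N l n * x ^ n) \<le> ec N 0 n * \<bar>x\<bar> ^ n"
    using ec_abs_le[OF N l] by (auto simp: abs_mult power_abs intro!: mult_right_mono)
qed (use x in auto)



definition E :: "real \<Rightarrow> real \<Rightarrow> real \<Rightarrow> real" where
  "E N l x = (\<Sum>n. ec N l n * x ^ n)"
definition E1 :: "real \<Rightarrow> real \<Rightarrow> real \<Rightarrow> real" where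
  "E1 N l x = (\<Sum>n. diffs (ec N l) n * x ^ n)"
definition E2 :: "real \<Rightarrow> real \<Rightarrow> real \<Rightarrow> real" where
  "E2 N l x = (\<Sum>n. diffs (diffs (ec N l)) n * x ^ n)"

definition sh :: "(nat \<Rightarrow> real) \<Rightarrow> nat \<Rightarrow> real" where
  "sh a n = (case n of 0 \<Rightarrow> 0 | Suc m \<Rightarrow> a m)"

lemma sums_sh:
  assumes "(\<lambda>n. a n * x ^ n) sums S"
  shows "(\<lambda>n. sh a n * x ^ n) sums (x * S)"
proof -
  have "(\<lambda>n. x * (a n * x ^ n)) sums (x * S)" by (rule sums_mult[OF assms])
  then have "(\<lambda>n. sh a (Suc n) * x ^ (Suc n)) sums (x * S)"
    by (simp add: sh_def algebra_simps)
  then show ?thesis by (subst (asm) sums_Suc_iff) (simp add: sh_def)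
qed

context
  fixes N l :: real
  assumes N: "N \<ge> 2" and l: "0 \<le> l" "l \<le> 1"
begin

lemma sum0: "\<bar>x\<bar> < 1 \<Longrightarrow> summable (\<lambda>n. ec N l n * x ^ n)"
  using ec_summable[OF N l] by simp

lemma sum1: "\<bar>x\<bar> < 1 \<Longrightarrow> summable (\<lambda>n. diffs (ec N l) n * x ^ n)"
  by (rule termdiff_converges[where K = 1]) (use sum0 in auto)

lemma sum2: "\<bar>x\<bar> < 1 \<Longrightarrow> summable (\<lambda>n. diffs (diffs (ec N l)) n * x ^ n)"
  by (rule termdiff_converges[where K = 1]) (use sum1 in auto)

lemma sum3: "\<bar>x\<bar> < 1 \<Longrightarrow> summable (\<lambda>n. diffs (diffs (diffs (ec N l))) n * x ^ n)"
  by (rule termdiff_converges[where K = 1]) (use sum2 in auto)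

lemma E_deriv: "\<bar>x\<bar> < 1 \<Longrightarrow> DERIV (E N l) x :> E1 N l x"
  unfolding E_def[abs_def] E1_def
  by (rule termdiffs_strong'[where K = 1]) (use sum0 in auto)

lemma E1_deriv: "\<bar>x\<bar> < 1 \<Longrightarrow> DERIV (E1 N l) x :> E2 N l x"
  unfolding E1_def[abs_def] E2_def
  by (rule termdiffs_strong'[where K = 1]) (use sum1 in auto)

lemma E2_deriv: "\<bar>x\<bar> < 1 \<Longrightarrow> DERIV (E2 N l) x :> (\<Sum>n. diffs (diffs (diffs (ec N l))) n * x ^ n)"
  unfolding E2_def[abs_def]
  by (rule termdiffs_strong'[where K = 1]) (use sum2 in auto)

lemma E2_cont: "continuous_on {-1<..<1} (E2 N l)"
  by (intro continuous_at_imp_continuous_on ballI DERIV_isCont[OF E2_deriv]) auto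

lemma E_ode:
  assumes x: "\<bar>x\<bar> < 1"
  shows "x * (1 - x) * E2 N l x + (N / 2) * (1 - 2 * x) * E1 N l x = 1 - l * E N l x"
proof -
  define c where "c = ec N l"
  define A where "A = diffs (diffs c)"
  define B where "B = diffs c"
  have sA: "(\<lambda>n. A n * x ^ n) sums E2 N l x"
    unfolding A_def c_def E2_def using sum2[OF x] by (simp add: summable_sums)
  have sB: "(\<lambda>n. B n * x ^ n) sums E1 N l x"
    unfolding B_def c_def E1_def using sum1[OF x] by (simp add: summable_sums)
  have sC: "(\<lambda>n. c n * x ^ n) sums E N l x"
    unfolding c_def E_def using sum0[OF x] by (simp add: summable_sums)
  have s1: "(\<lambda>n. sh A n * x ^ n) sums (x * E2 N l x)" by (rule sums_sh[OF sA])
  have s2: "(\<lambda>n. sh (sh A) n * x ^ n) sums (x * (x * E2 N l x))" by (rule sums_sh[OF s1])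
  have s3: "(\<lambda>n. sh B n * x ^ n) sums (x * E1 N l x)" by (rule sums_sh[OF sB])
  define L where "L n = sh A n - sh (sh A) n + (N / 2) * B n - N * sh B n" for n
  have sL: "(\<lambda>n. L n * x ^ n) sums (x * E2 N l x - x * (x * E2 N l x) + (N / 2) * E1 N l x - N * (x * E1 N l x))"
    unfolding L_def
    using sums_diff[OF sums_add[OF sums_diff[OF s1 s2] sums_mult[OF sB, of "N/2"]] sums_mult[OF s3, of N]]
    by (simp add: algebra_simps)
  define R where "R n = (if n = 0 then 1 else 0) - l * c n" for n
  have s0: "(\<lambda>n. (if n = 0 then 1 else 0) * x ^ n) sums 1"
  proof -
    have "(\<lambda>n. if n = 0 then (1::real) else 0) sums 1" using sums_single[of 0 "\<lambda>_. 1::real"] by simp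
    moreover have "(\<lambda>n. (if n = 0 then 1 else 0) * x ^ n) = (\<lambda>n. if n = 0 then (1::real) else 0)" by auto
    ultimately show ?thesis by simp
  qed
  have sR: "(\<lambda>n. R n * x ^ n) sums (1 - l * E N l x)"
    unfolding R_def using sums_diff[OF s0 sums_mult[OF sC, of l]] by (simp add: algebra_simps)
  have LR: "L n = R n" for n
  proof (cases n)
    case 0
    then show ?thesis using N unfolding L_def R_def A_def B_def sh_def c_def diffs_def by simp
  next
    case (Suc m)
    have shsh: "sh (sh A) (Suc m) = real m * (real m + 1) * c (Suc m)"
      by (cases m) (simp_all add: sh_def A_def diffs_def)
    have "L n = (real m + 1) * (real m + 2) * c (Suc (Suc m)) - real m * (real m + 1) * c (Suc m)
                + (N / 2) * (real m + 2) * c (Suc (Suc m)) - N * (real m + 1) * c (Suc m)"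
      unfolding L_def Suc using shsh by (simp add: sh_def A_def B_def diffs_def algebra_simps)
    also have "\<dots> = (real m + 2) * (real m + 1 + N / 2) * c (Suc (Suc m)) - (real m + 1) * (real m + N) * c (Suc m)"
      by (simp add: algebra_simps)
    finally have L1: "L n = (real m + 2) * (real m + 1 + N / 2) * c (Suc (Suc m)) - (real m + 1) * (real m + N) * c (Suc m)" .
    have L2: "(real m + 2) * (real m + 1 + N / 2) * c (Suc (Suc m)) = ((real m + 1) * (real m + N) - l) * c (Suc m)"
    proof -
      have "c (Suc (Suc m)) = (real (Suc m) * (real (Suc m) + N - 1) - l) / ((real (Suc m) + 1) * (real (Suc m) + N / 2)) * c (Suc m)"
        unfolding c_def by (rule ec_rec) simp
      moreover have "(real m + 2) * (real m + 1 + N / 2) \<noteq> 0" using N by simp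
      ultimately show ?thesis by (simp add: field_simps)
    qed
    show ?thesis by (subst L1, subst L2) (simp add: R_def Suc algebra_simps)
  qed
  have "x * E2 N l x - x * (x * E2 N l x) + (N / 2) * E1 N l x - N * (x * E1 N l x) = 1 - l * E N l x"
  proof -
    have "(\<lambda>n. R n * x ^ n) sums (x * E2 N l x - x * (x * E2 N l x) + (N / 2) * E1 N l x - N * (x * E1 N l x))"
      using sL LR by simp
    from sums_unique2[OF this sR] show ?thesis .
  qed
  then show ?thesis by (simp add: algebra_simps)
qed

end



lemma line_deriv:
  fixes f :: "'a::real_normed_vector \<Rightarrow> real"
  assumes "(f has_derivative F) (at (x + s *\<^sub>R e))"
  shows "((\<lambda>t. f (x + t *\<^sub>R e)) has_field_derivative F e) (at s)"
proof -
  have l: "linear F" using assms has_derivative_linear by blast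
  have "((\<lambda>t. x + t *\<^sub>R e) has_derivative (\<lambda>h. h *\<^sub>R e)) (at s)"
    by (auto intro!: derivative_eq_intros)
  from has_derivative_compose[OF this assms] 
  have "((\<lambda>t. f (x + t *\<^sub>R e)) has_derivative (\<lambda>h. F (h *\<^sub>R e))) (at s)" .
  moreover have "(\<lambda>h. F (h *\<^sub>R e)) = (*) (F e)" by (rule ext) (simp add: linear_scale[OF l] mult.commute)
  ultimately show ?thesis unfolding has_field_derivative_def by simp
qed

lemma second_line_deriv:
  fixes g :: "'a::real_normed_vector \<Rightarrow> real"
  assumes U: "open U" "x \<in> U"
  and d1: "\<And>y. y \<in> U \<Longrightarrow> (g has_derivative Da y) (at y)"
  and d2: "\<And>y b. y \<in> U \<Longrightarrow> ((\<lambda>y. Da y b) has_derivative Db y b) (at y)"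
  shows "deriv (deriv (\<lambda>t. g (x + t *\<^sub>R e))) 0 = Db x e e"
    and "\<forall>\<^sub>F t in nhds 0. x + t *\<^sub>R e \<in> U"
    and "\<And>t. x + t *\<^sub>R e \<in> U \<Longrightarrow> ((\<lambda>t. g (x + t *\<^sub>R e)) has_field_derivative Da (x + t *\<^sub>R e) e) (at t)"
    and "((\<lambda>t. Da (x + t *\<^sub>R e) e) has_field_derivative Db x e e) (at 0)"
proof -
  have cont: "continuous_on UNIV (\<lambda>t::real. x + t *\<^sub>R e)" by (intro continuous_intros)
  have oS: "open ((\<lambda>t::real. x + t *\<^sub>R e) -` U)"
    by (rule continuous_open_vimage[OF U(1)]) (intro continuous_intros)
  show ev: "\<forall>\<^sub>F t in nhds 0. x + t *\<^sub>R e \<in> U"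
    using eventually_nhds_in_open[OF oS] U by simp
  show dd: "\<And>t. x + t *\<^sub>R e \<in> U \<Longrightarrow> ((\<lambda>t. g (x + t *\<^sub>R e)) has_field_derivative Da (x + t *\<^sub>R e) e) (at t)"
    by (rule line_deriv[OF d1])
  show d0: "((\<lambda>t. Da (x + t *\<^sub>R e) e) has_field_derivative Db x e e) (at 0)"
    using line_deriv[of "\<lambda>y. Da y e" "Db x e" x 0 e] d2[OF U(2)] by simp
  have "\<forall>\<^sub>F t in nhds 0. deriv (\<lambda>t. g (x + t *\<^sub>R e)) t = Da (x + t *\<^sub>R e) e"
    using ev by eventually_elim (rule DERIV_imp_deriv[OF dd])
  then have "deriv (deriv (\<lambda>t. g (x + t *\<^sub>R e))) 0 = deriv (\<lambda>t. Da (x + t *\<^sub>R e) e) 0"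
    by (rule deriv_cong_ev) simp
  also have "\<dots> = Db x e e" by (rule DERIV_imp_deriv[OF d0])
  finally show "deriv (deriv (\<lambda>t. g (x + t *\<^sub>R e))) 0 = Db x e e" .
qed

lemma lap_partials:
  fixes g :: "real^'n \<Rightarrow> real"
  assumes U: "open U" "x \<in> U"
  and d1: "\<And>y. y \<in> U \<Longrightarrow> (g has_derivative Da y) (at y)"
  and d2: "\<And>y b. y \<in> U \<Longrightarrow> ((\<lambda>y. Da y b) has_derivative Db y b) (at y)"
  shows "eucl_laplacian g x = (\<Sum>i\<in>UNIV. Db x (axis i 1) (axis i 1))"
  unfolding eucl_laplacian_def
  by (rule sum.cong[OF refl], rule second_line_deriv(1)[OF U d1 d2])

lemma C2_witness_partials:
  assumes "C2_on U g"
  obtains Da Db where "\<And>y. y \<in> U \<Longrightarrow> (g has_derivative Da y) (at y)"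
    "\<And>y b. y \<in> U \<Longrightarrow> ((\<lambda>y. Da y b) has_derivative Db y b) (at y)"
proof -
  from assms obtain g' g'' where
    c: "continuous_on U g''" and
    d: "\<forall>x\<in>U. (g has_derivative blinfun_apply (g' x)) (at x) \<and> (g' has_derivative blinfun_apply (g'' x)) (at x)"
    unfolding C2_on_def by blast
  show ?thesis
  proof (rule that[of "\<lambda>y. blinfun_apply (g' y)" "\<lambda>y b c. blinfun_apply (g'' y c) b"])
    fix y assume "y \<in> U"
    then show "(g has_derivative blinfun_apply (g' y)) (at y)" using d by blast
  next
    fix y b assume "y \<in> U"
    then have "(g' has_derivative blinfun_apply (g'' y)) (at y)" using d by blast
    then show "((\<lambda>y. blinfun_apply (g' y) b) has_derivative (\<lambda>c. blinfun_apply (g'' y c) b)) (at y)"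
      by (auto intro!: derivative_eq_intros)
  qed
qed

definition Kb :: "'a::real_inner \<Rightarrow> 'a \<Rightarrow>\<^sub>L real" where "Kb b = blinfun_inner_left b"
definition Mcb :: "'a::real_inner \<Rightarrow> 'a \<Rightarrow> 'a \<Rightarrow>\<^sub>L ('a \<Rightarrow>\<^sub>L real)" where
  "Mcb c b = blinfun_compose (blinfun_scaleR_left (Kb b)) (blinfun_inner_left c)"

lemma Mcb_apply: "blinfun_apply (Mcb c b) w = (w \<bullet> c) *\<^sub>R Kb b"
  unfolding Mcb_def by simp

lemma C2_from_partials:
  fixes g :: "'a::euclidean_space \<Rightarrow> real"
  assumes U: "open U"
  and d1: "\<And>y. y \<in> U \<Longrightarrow> (g has_derivative Da y) (at y)"
  and d2: "\<And>y b. y \<in> U \<Longrightarrow> ((\<lambda>y. Da y b) has_derivative Db y b) (at y)"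
  and c2: "\<And>b c. continuous_on U (\<lambda>y. Db y b c)"
  shows "C2_on U g"
proof -
  define g' where "g' y = (\<Sum>b\<in>Basis. Da y b *\<^sub>R Kb b)" for y
  define g'' where "g'' y = (\<Sum>b\<in>Basis. \<Sum>c\<in>Basis. Db y b c *\<^sub>R Mcb c b)" for y
  have lin1: "linear (Da y)" if "y \<in> U" for y using d1[OF that] has_derivative_linear by blast
  have lin2: "linear (Db y b)" if "y \<in> U" for y b using d2[OF that] has_derivative_linear by blast
  have g'a: "blinfun_apply (g' y) v = Da y v" if "y \<in> U" for y v
  proof -
    have "blinfun_apply (g' y) v = (\<Sum>b\<in>Basis. (v \<bullet> b) * Da y b)"
      unfolding g'_def Kb_def by (simp add: blinfun.sum_left blinfun.scaleR_left mult.commute inner_commute)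
    also have "\<dots> = Da y (\<Sum>b\<in>Basis. (v \<bullet> b) *\<^sub>R b)"
      using lin1[OF that] by (simp add: linear_sum linear_scale)
    also have "\<dots> = Da y v" by (simp add: euclidean_representation)
    finally show ?thesis .
  qed
  have g''a: "blinfun_apply (g'' y) w = (\<Sum>b\<in>Basis. Db y b w *\<^sub>R Kb b)" if "y \<in> U" for y w
  proof -
    have "blinfun_apply (g'' y) w = (\<Sum>b\<in>Basis. (\<Sum>c\<in>Basis. (w \<bullet> c) * Db y b c) *\<^sub>R Kb b)"
      unfolding g''_def by (simp add: blinfun.sum_left blinfun.scaleR_left Mcb_apply scaleR_sum_left mult.commute)
    also have "\<dots> = (\<Sum>b\<in>Basis. Db y b w *\<^sub>R Kb b)"
    proof (rule sum.cong[OF refl])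
      fix b :: 'a
      have "(\<Sum>c\<in>Basis. (w \<bullet> c) * Db y b c) = Db y b (\<Sum>c\<in>Basis. (w \<bullet> c) *\<^sub>R c)"
        using lin2[OF that] by (simp add: linear_sum linear_scale)
      also have "\<dots> = Db y b w" by (simp add: euclidean_representation)
      finally show "(\<Sum>c\<in>Basis. (w \<bullet> c) * Db y b c) *\<^sub>R Kb b = Db y b w *\<^sub>R Kb b" by simp
    qed
    finally show ?thesis .
  qed
  show ?thesis
    unfolding C2_on_def
  proof (intro exI conjI ballI)
    show "continuous_on U g''" unfolding g''_def by (intro continuous_intros c2)
  next
    fix x assume x: "x \<in> U"
    have "(Da x) = blinfun_apply (g' x)" using g'a[OF x] by auto
    then show "(g has_derivative blinfun_apply (g' x)) (at x)" using d1[OF x] by simp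
    have "(g' has_derivative (\<lambda>w. (\<Sum>b\<in>Basis. Db x b w *\<^sub>R Kb b))) (at x)"
      unfolding g'_def
      by (rule derivative_eq_intros refl d2[OF x] | simp)+
    moreover have "(\<lambda>w. (\<Sum>b\<in>Basis. Db x b w *\<^sub>R Kb b)) = blinfun_apply (g'' x)"
      using g''a[OF x] by auto
    ultimately show "(g' has_derivative blinfun_apply (g'' x)) (at x)" by simp
  qed
qed



lemma max1d:
  fixes ch ch1 :: "real \<Rightarrow> real"
  assumes ev: "\<forall>\<^sub>F t in nhds 0. (ch has_field_derivative ch1 t) (at t) \<and> ch t \<le> ch 0"
  and d0: "(ch1 has_field_derivative c) (at 0)"
  shows "c \<le> 0"
proof (rule ccontr)
  assume "\<not> c \<le> 0"
  then have c: "c > 0" by simp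
  from ev obtain d where d: "d > 0" "\<And>t. \<bar>t\<bar> < d \<Longrightarrow> (ch has_field_derivative ch1 t) (at t) \<and> ch t \<le> ch 0"
    unfolding eventually_nhds_metric dist_real_def by auto
  have z: "ch1 0 = 0"
    by (rule DERIV_local_max[OF conjunct1[OF d(2)[of 0]] d(1)]) (use d in auto)
  from DERIV_pos_inc_right[OF d0 c] obtain d2 where d2: "d2 > 0" "\<And>h. h > 0 \<Longrightarrow> h < d2 \<Longrightarrow> ch1 0 < ch1 (0 + h)"
    by blast
  define s where "s = min d d2 / 2"
  have s: "0 < s" "s < d" "s < d2" using d d2 unfolding s_def by auto
  obtain z where zz: "0 < z" "z < s" "ch s - ch 0 = (s - 0) * ch1 z"
    using MVT2[OF s(1), of ch ch1] d(2) s by force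
  have "ch1 z > 0" using d2(2)[of z] zz s z by simp
  then have "ch s - ch 0 > 0" using zz s by simp
  moreover have "ch s \<le> ch 0" using d(2)[of s] s by simp
  ultimately show False by simp
qed

lemma hom0_ext_cone:
  assumes "y \<in> cone_over \<Omega>"
  shows "hom0_ext u y = u (y /\<^sub>R norm y)" "y /\<^sub>R norm y \<in> \<Omega>"
  using assms unfolding hom0_ext_def cone_over_def by auto

lemma in_cone:
  fixes x :: "real^'n"
  assumes "x \<in> \<Omega>" "norm x = 1"
  shows "x \<in> cone_over \<Omega>"
  using assms unfolding cone_over_def by auto

lemma lmax:
  fixes \<Omega> :: "(real^'n) set"
  assumes sph: "\<forall>x\<in>\<Omega>. norm x = 1" and op: "open (cone_over \<Omega>)"
  and x0: "x0 \<in> \<Omega>"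
  and C1: "C2_on (cone_over \<Omega>) (hom0_ext u1)" and C2: "C2_on (cone_over \<Omega>) (hom0_ext u2)"
  and mx: "\<forall>x\<in>\<Omega>. u1 x - u2 x \<le> u1 x0 - u2 x0"
  shows "sphere_laplacian u1 x0 \<le> sphere_laplacian u2 x0"
proof -
  have x0c: "x0 \<in> cone_over \<Omega>" using in_cone[OF x0] sph x0 by auto
  obtain A1 A2 where a1: "\<And>y. y \<in> cone_over \<Omega> \<Longrightarrow> (hom0_ext u1 has_derivative A1 y) (at y)"
    and a2: "\<And>y b. y \<in> cone_over \<Omega> \<Longrightarrow> ((\<lambda>y. A1 y b) has_derivative A2 y b) (at y)"
    using C2_witness_partials[OF C1] by blast
  obtain B1 B2 where b1: "\<And>y. y \<in> cone_over \<Omega> \<Longrightarrow> (hom0_ext u2 has_derivative B1 y) (at y)"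
    and b2: "\<And>y b. y \<in> cone_over \<Omega> \<Longrightarrow> ((\<lambda>y. B1 y b) has_derivative B2 y b) (at y)"
    using C2_witness_partials[OF C2] by blast
  have "sphere_laplacian u1 x0 = (\<Sum>i\<in>UNIV. A2 x0 (axis i 1) (axis i 1))"
    unfolding sphere_laplacian_def by (rule lap_partials[OF op x0c a1 a2])
  moreover have "sphere_laplacian u2 x0 = (\<Sum>i\<in>UNIV. B2 x0 (axis i 1) (axis i 1))"
    unfolding sphere_laplacian_def by (rule lap_partials[OF op x0c b1 b2])
  moreover have "A2 x0 (axis i 1) (axis i 1) \<le> B2 x0 (axis i 1) (axis i 1)" for i
  proof -
    define e :: "real^'n" where "e = axis i 1"
    have sa2: "\<forall>\<^sub>F t in nhds 0. x0 + t *\<^sub>R e \<in> cone_over \<Omega>"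
      by (rule second_line_deriv(2)[OF op x0c a1 a2])
    have sa3: "\<And>t. x0 + t *\<^sub>R e \<in> cone_over \<Omega> \<Longrightarrow> ((\<lambda>t. hom0_ext u1 (x0 + t *\<^sub>R e)) has_field_derivative A1 (x0 + t *\<^sub>R e) e) (at t)"
      by (rule second_line_deriv(3)[OF op x0c a1 a2])
    have sb3: "\<And>t. x0 + t *\<^sub>R e \<in> cone_over \<Omega> \<Longrightarrow> ((\<lambda>t. hom0_ext u2 (x0 + t *\<^sub>R e)) has_field_derivative B1 (x0 + t *\<^sub>R e) e) (at t)"
      by (rule second_line_deriv(3)[OF op x0c b1 b2])
    have sa4: "((\<lambda>t. A1 (x0 + t *\<^sub>R e) e) has_field_derivative A2 x0 e e) (at 0)"
      by (rule second_line_deriv(4)[OF op x0c a1 a2])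
    have sb4: "((\<lambda>t. B1 (x0 + t *\<^sub>R e) e) has_field_derivative B2 x0 e e) (at 0)"
      by (rule second_line_deriv(4)[OF op x0c b1 b2])
    define ch where "ch t = hom0_ext u1 (x0 + t *\<^sub>R e) - hom0_ext u2 (x0 + t *\<^sub>R e)" for t
    have "A2 x0 e e - B2 x0 e e \<le> 0"
    proof (rule max1d[of ch "\<lambda>t. A1 (x0 + t *\<^sub>R e) e - B1 (x0 + t *\<^sub>R e) e"])
      show "((\<lambda>t. A1 (x0 + t *\<^sub>R e) e - B1 (x0 + t *\<^sub>R e) e) has_field_derivative A2 x0 e e - B2 x0 e e) (at 0)"
        by (intro DERIV_diff sa4 sb4)
      have "ch 0 = u1 x0 - u2 x0" unfolding ch_def hom0_ext_def using sph x0 by simp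
      show "\<forall>\<^sub>F t in nhds 0. (ch has_field_derivative A1 (x0 + t *\<^sub>R e) e - B1 (x0 + t *\<^sub>R e) e) (at t) \<and> ch t \<le> ch 0"
        using sa2
      proof eventually_elim
        case (elim t)
        have "(ch has_field_derivative A1 (x0 + t *\<^sub>R e) e - B1 (x0 + t *\<^sub>R e) e) (at t)"
          unfolding ch_def[abs_def] by (intro DERIV_diff sa3 sb3 elim)
        moreover have "ch t \<le> ch 0"
          using hom0_ext_cone(1)[OF elim, of u1] hom0_ext_cone(1)[OF elim, of u2] hom0_ext_cone(2)[OF elim] mx \<open>ch 0 = u1 x0 - u2 x0\<close>
          unfolding ch_def by auto
        ultimately show ?case by simp
      qed
    qed
    then show ?thesis unfolding e_def by simp
  qed
  ultimately show ?thesis by (simp add: sum_mono)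
qed

lemma closure_sphere_compact:
  fixes \<Omega> :: "(real^'n) set"
  assumes sph: "\<forall>x\<in>\<Omega>. norm x = 1"
  shows "compact (closure \<Omega>)"
proof -
  have "\<Omega> \<subseteq> cball 0 1" using sph by auto
  then have "bounded \<Omega>" using bounded_cball bounded_subset by blast
  then show ?thesis using compact_closure by blast
qed

lemma cmp:
  fixes \<Omega> :: "(real^'n) set"
  assumes sph: "\<forall>x\<in>\<Omega>. norm x = 1" and op: "open (cone_over \<Omega>)"
  and C1: "C2_on (cone_over \<Omega>) (hom0_ext u1)" and C2: "C2_on (cone_over \<Omega>) (hom0_ext u2)"
  and c1: "continuous_on (closure \<Omega>) u1" and c2: "continuous_on (closure \<Omega>) u2"
  and z: "\<And>x. x \<notin> \<Omega> \<Longrightarrow> u1 x = 0 \<and> u2 x = 0"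
  and lap: "\<And>x. x \<in> \<Omega> \<Longrightarrow> sphere_laplacian u1 x > sphere_laplacian u2 x"
  shows "u1 x \<le> u2 x"
proof (cases "\<Omega> = {}")
  case True then show ?thesis using z by simp
next
  case False
  then have ne: "closure \<Omega> \<noteq> {}" by simp
  obtain p where p: "p \<in> closure \<Omega>" "\<And>y. y \<in> closure \<Omega> \<Longrightarrow> u1 y - u2 y \<le> u1 p - u2 p"
    using continuous_attains_sup[OF closure_sphere_compact[OF sph] ne continuous_on_diff[OF c1 c2]] by blast
  have "p \<notin> \<Omega>"
  proof
    assume pO: "p \<in> \<Omega>"
    have "sphere_laplacian u1 p \<le> sphere_laplacian u2 p"
      by (rule lmax[OF sph op pO C1 C2]) (use p closure_subset in blast)
    with lap[OF pO] show False by simp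
  qed
  then have "u1 p - u2 p = 0" using z by simp
  show ?thesis
  proof (cases "x \<in> closure \<Omega>")
    case True then show ?thesis using p(2)[OF True] \<open>u1 p - u2 p = 0\<close> by simp
  next
    case False then have "x \<notin> \<Omega>" using closure_subset by blast
    then show ?thesis using z by simp
  qed
qed

lemma C2_scale:
  assumes "C2_on U (hom0_ext u)"
  shows "C2_on U (hom0_ext (\<lambda>x. c * u x))"
proof -
  from assms obtain g' g'' where
    cc: "continuous_on U g''" and
    d: "\<forall>x\<in>U. (hom0_ext u has_derivative blinfun_apply (g' x)) (at x) \<and> (g' has_derivative blinfun_apply (g'' x)) (at x)"
    unfolding C2_on_def by blast
  have h: "hom0_ext (\<lambda>x. c * u x) = (\<lambda>y. c * hom0_ext u y)" unfolding hom0_ext_def by simp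
  show ?thesis unfolding C2_on_def h
  proof (intro exI[of _ "\<lambda>y. c *\<^sub>R g' y"] exI[of _ "\<lambda>y. c *\<^sub>R g'' y"] conjI ballI)
    show "continuous_on U (\<lambda>y. c *\<^sub>R g'' y)" by (intro continuous_intros cc)
  next
    fix x assume x: "x \<in> U"
    have "((\<lambda>y. c * hom0_ext u y) has_derivative (\<lambda>v. c * blinfun_apply (g' x) v)) (at x)"
      using d x by (auto intro!: derivative_eq_intros)
    moreover have "blinfun_apply (c *\<^sub>R g' x) = (\<lambda>v. c * blinfun_apply (g' x) v)"
      by (rule ext) (simp add: blinfun.scaleR_left)
    ultimately show "((\<lambda>y. c * hom0_ext u y) has_derivative blinfun_apply (c *\<^sub>R g' x)) (at x)"
      by simp
    have "((\<lambda>y. c *\<^sub>R g' y) has_derivative (\<lambda>v. c *\<^sub>R blinfun_apply (g'' x) v)) (at x)"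
      using d x by (auto intro!: derivative_eq_intros)
    moreover have "blinfun_apply (c *\<^sub>R g'' x) = (\<lambda>v. c *\<^sub>R blinfun_apply (g'' x) v)"
      by (rule ext) (simp add: blinfun.scaleR_left)
    ultimately show "((\<lambda>y. c *\<^sub>R g' y) has_derivative blinfun_apply (c *\<^sub>R g'' x)) (at x)"
      by simp
  qed
qed

lemma SL_scale:
  fixes \<Omega> :: "(real^'n) set"
  assumes op: "open (cone_over \<Omega>)" and x: "x \<in> cone_over \<Omega>"
  and C: "C2_on (cone_over \<Omega>) (hom0_ext u)"
  shows "sphere_laplacian (\<lambda>x. c * u x) x = c * sphere_laplacian u x"
proof -
  obtain A1 A2 where a1: "\<And>y. y \<in> cone_over \<Omega> \<Longrightarrow> (hom0_ext u has_derivative A1 y) (at y)"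
    and a2: "\<And>y b. y \<in> cone_over \<Omega> \<Longrightarrow> ((\<lambda>y. A1 y b) has_derivative A2 y b) (at y)"
    using C2_witness_partials[OF C] by blast
  have h: "hom0_ext (\<lambda>x. c * u x) = (\<lambda>y. c * hom0_ext u y)" unfolding hom0_ext_def by simp
  have "sphere_laplacian u x = (\<Sum>i\<in>UNIV. A2 x (axis i 1) (axis i 1))"
    unfolding sphere_laplacian_def by (rule lap_partials[OF op x a1 a2])
  moreover have "sphere_laplacian (\<lambda>x. c * u x) x = (\<Sum>i\<in>UNIV. c * A2 x (axis i 1) (axis i 1))"
    unfolding sphere_laplacian_def h
    by (rule lap_partials[where Da = "\<lambda>y v. c * A1 y v" and Db = "\<lambda>y b w. c * A2 y b w", OF op x])
      (use a1 a2 in \<open>auto intro!: derivative_eq_intros\<close>)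
  ultimately show ?thesis by (simp add: sum_distrib_left)
qed



definition rho :: "real^'n \<Rightarrow> real" where "rho y = inverse (norm y)"
definition hq :: "'n \<Rightarrow> real^'n \<Rightarrow> real" where "hq k y = (1 - y $ k * rho y) / 2"
definition Dh :: "'n \<Rightarrow> real^'n \<Rightarrow> real^'n \<Rightarrow> real" where
  "Dh k y b = - (b $ k * rho y - y $ k * (y \<bullet> b) * rho y ^ 3) / 2"
definition D2h :: "'n \<Rightarrow> real^'n \<Rightarrow> real^'n \<Rightarrow> real^'n \<Rightarrow> real" where
  "D2h k y b c = - (- (rho y ^ 3) * (b $ k * (y \<bullet> c) + c $ k * (y \<bullet> b) + y $ k * (b \<bullet> c))
                    + 3 * rho y ^ 5 * y $ k * (y \<bullet> b) * (y \<bullet> c)) / 2"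

lemma rho_deriv:
  fixes y :: "real^'n"
  assumes "y \<noteq> 0"
  shows "(rho has_derivative (\<lambda>c. - (rho y ^ 3) * (y \<bullet> c))) (at y)"
proof -
  have "((\<lambda>y. inverse (norm y)) has_derivative (\<lambda>h. - (inverse (norm y) * (h \<bullet> sgn y) * inverse (norm y)))) (at y)"
    using assms by (auto intro!: derivative_eq_intros has_derivative_norm)
  moreover have "(\<lambda>h. - (inverse (norm y) * (h \<bullet> sgn y) * inverse (norm y))) = (\<lambda>c. - (rho y ^ 3) * (y \<bullet> c))"
    using assms by (auto simp: rho_def sgn_div_norm inner_commute power3_eq_cube field_simps)
  ultimately show ?thesis unfolding rho_def[abs_def] by simp
qed

lemma hq_deriv:
  fixes y :: "real^'n"
  assumes "y \<noteq> 0"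
  shows "(hq k has_derivative Dh k y) (at y)"
proof -
  have "((\<lambda>y. (1 - y $ k * rho y) / 2) has_derivative
     (\<lambda>c. (0 - (y $ k * (- (rho y ^ 3) * (y \<bullet> c)) + c $ k * rho y)) / 2)) (at y)"
    by (rule derivative_eq_intros rho_deriv[OF assms] bounded_linear.has_derivative[OF bounded_linear_vec_nth] has_derivative_ident refl | simp)+
  moreover have "(\<lambda>c. (0 - (y $ k * (- (rho y ^ 3) * (y \<bullet> c)) + c $ k * rho y)) / 2) = Dh k y"
    by (rule ext) (simp add: Dh_def algebra_simps)
  ultimately show ?thesis unfolding hq_def[abs_def] by simp
qed

lemma Dh_deriv:
  fixes y :: "real^'n"
  assumes "y \<noteq> 0"
  shows "((\<lambda>y. Dh k y b) has_derivative D2h k y b) (at y)"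
  unfolding Dh_def[abs_def]
  apply (rule has_derivative_eq_rhs)
   apply (rule derivative_eq_intros rho_deriv[OF assms] bounded_linear.has_derivative[OF bounded_linear_vec_nth] has_derivative_ident refl)+
    apply simp
   apply (rule refl)
  apply (rule ext)
  apply (simp add: D2h_def algebra_simps inner_commute power2_eq_square power3_eq_cube eval_nat_numeral)
  done



context
  fixes k :: "'n::finite" and Phi Phi1 Phi2 :: "real \<Rightarrow> real"
  assumes d1: "\<And>x. x \<in> {-1<..<1} \<Longrightarrow> (Phi has_field_derivative Phi1 x) (at x)"
  and d2: "\<And>x. x \<in> {-1<..<1} \<Longrightarrow> (Phi1 has_field_derivative Phi2 x) (at x)"
  and c2: "continuous_on {-1<..<1} Phi2"
begin

definition GDa :: "real^'n \<Rightarrow> real^'n \<Rightarrow> real" where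
  "GDa y b = Phi1 (hq k y) * Dh k y b"
definition GDb :: "real^'n \<Rightarrow> real^'n \<Rightarrow> real^'n \<Rightarrow> real" where
  "GDb y b c = Phi2 (hq k y) * Dh k y c * Dh k y b + Phi1 (hq k y) * D2h k y b c"

lemma G_d1:
  assumes "y \<noteq> 0" "hq k y \<in> {-1<..<1}"
  shows "((\<lambda>y. Phi (hq k y)) has_derivative GDa y) (at y)"
proof -
  have "((\<lambda>y. Phi (hq k y)) has_derivative (\<lambda>b. Dh k y b * Phi1 (hq k y))) (at y)"
    by (rule DERIV_compose_FDERIV[OF d1[OF assms(2)] hq_deriv[OF assms(1)]])
  then show ?thesis unfolding GDa_def[abs_def] by (simp add: mult.commute)
qed

lemma G_d2:
  assumes "y \<noteq> 0" "hq k y \<in> {-1<..<1}"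
  shows "((\<lambda>y. GDa y b) has_derivative GDb y b) (at y)"
proof -
  have ph: "((\<lambda>y. Phi1 (hq k y)) has_derivative (\<lambda>c. Dh k y c * Phi2 (hq k y))) (at y)"
    by (rule DERIV_compose_FDERIV[OF d2[OF assms(2)] hq_deriv[OF assms(1)]])
  have "((\<lambda>y. Phi1 (hq k y) * Dh k y b) has_derivative
        (\<lambda>c. Phi1 (hq k y) * D2h k y b c + Dh k y c * Phi2 (hq k y) * Dh k y b)) (at y)"
    by (rule has_derivative_mult[OF ph Dh_deriv[OF assms(1)], THEN has_derivative_eq_rhs]) auto
  then show ?thesis unfolding GDa_def GDb_def by (simp add: algebra_simps)
qed

lemma Phi1_cont: "continuous_on {-1<..<1} Phi1"
  by (intro continuous_at_imp_continuous_on ballI DERIV_isCont[OF d2]) auto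

lemma G_c2:
  assumes V: "\<And>y. y \<in> V \<Longrightarrow> y \<noteq> 0 \<and> hq k y \<in> {-1<..<1}"
  shows "continuous_on V (\<lambda>y. GDb y b c)"
proof -
  have nz: "\<And>y. y \<in> V \<Longrightarrow> norm y \<noteq> 0" using V by auto
  have rc: "continuous_on V rho" unfolding rho_def using nz by (intro continuous_intros) auto
  have hc: "continuous_on V (hq k)" unfolding hq_def using rc by (intro continuous_intros) auto
  have p2: "continuous_on V (\<lambda>y. Phi2 (hq k y))"
    by (rule continuous_on_compose2[OF c2 hc]) (use V in auto)
  have p1: "continuous_on V (\<lambda>y. Phi1 (hq k y))"
    by (rule continuous_on_compose2[OF Phi1_cont hc]) (use V in auto)
  show ?thesis unfolding GDb_def Dh_def D2h_def
    using rc p1 p2 by (intro continuous_intros) auto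
qed

lemma G_lap:
  fixes y :: "real^'n"
  assumes y: "norm y = 1"
  shows "(\<Sum>i\<in>UNIV. GDb y (axis i 1) (axis i 1)) =
    hq k y * (1 - hq k y) * Phi2 (hq k y) + ((real CARD('n) - 1) / 2) * (1 - 2 * hq k y) * Phi1 (hq k y)"
proof -
  define a where "a = y $ k"
  define d where "d i = (axis i 1 :: real^'n) $ k" for i
  have r1: "rho y = 1" using y by (simp add: rho_def)
  have hx: "hq k y = (1 - a) / 2" unfolding hq_def a_def r1 by simp
  have dd: "d i = (if i = k then 1 else 0)" for i unfolding d_def axis_def by simp
  have yi: "y \<bullet> axis i 1 = y $ i" for i by (simp add: inner_axis)
  have ii: "(axis i 1 :: real^'n) \<bullet> axis i 1 = 1" for i by (simp add: inner_axis_axis)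
  have s_d: "(\<Sum>i\<in>UNIV. d i) = 1" unfolding dd by simp
  have s_dy: "(\<Sum>i\<in>UNIV. d i * y $ i) = a"
  proof -
    have "(\<Sum>i\<in>UNIV. d i * y $ i) = (\<Sum>i\<in>UNIV. if i = k then y $ i else 0)"
      by (rule sum.cong[OF refl]) (simp add: dd)
    then show ?thesis unfolding a_def by simp
  qed
  have s_yy: "(\<Sum>i\<in>UNIV. y $ i * y $ i) = 1"
  proof -
    have "y \<bullet> y = 1" using y norm_eq_1 by blast
    then show ?thesis by (simp add: inner_vec_def)
  qed
  have Dhi: "Dh k y (axis i 1) = - (d i - a * y $ i) / 2" for i
    unfolding Dh_def r1 d_def a_def yi by simp
  have D2hi: "D2h k y (axis i 1) (axis i 1) = - (- (2 * (d i * y $ i) + a) + 3 * a * (y $ i * y $ i)) / 2" for i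
    unfolding D2h_def r1 d_def[symmetric] a_def[symmetric] yi ii by (simp add: algebra_simps)
  have sq: "(\<Sum>i\<in>UNIV. Dh k y (axis i 1) * Dh k y (axis i 1)) = (1 - a * a) / 4"
  proof -
    have "(\<Sum>i\<in>UNIV. Dh k y (axis i 1) * Dh k y (axis i 1)) =
          (\<Sum>i\<in>UNIV. (d i - 2 * a * (d i * y $ i) + a * a * (y $ i * y $ i)) / 4)"
    proof (rule sum.cong[OF refl])
      fix i
      show "Dh k y (axis i 1) * Dh k y (axis i 1) = (d i - 2 * a * (d i * y $ i) + a * a * (y $ i * y $ i)) / 4"
        unfolding Dhi by (cases "i = k") (simp_all add: dd field_simps power2_eq_square)
    qed
    also have "\<dots> = (\<Sum>i\<in>UNIV. d i - 2 * a * (d i * y $ i) + a * a * (y $ i * y $ i)) / 4"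
      by (simp add: sum_divide_distrib)
    also have "(\<Sum>i\<in>UNIV. d i - 2 * a * (d i * y $ i) + a * a * (y $ i * y $ i)) =
       (\<Sum>i\<in>UNIV. d i) - 2 * a * (\<Sum>i\<in>UNIV. d i * y $ i) + a * a * (\<Sum>i\<in>UNIV. y $ i * y $ i)"
      by (simp add: sum.distrib sum_subtractf sum_distrib_left)
    finally show ?thesis unfolding s_d s_dy s_yy by simp
  qed
  have s2: "(\<Sum>i\<in>UNIV. D2h k y (axis i 1) (axis i 1)) = (real CARD('n) - 1) * a / 2"
  proof -
    have "(\<Sum>i\<in>UNIV. D2h k y (axis i 1) (axis i 1)) =
          (2 * (\<Sum>i\<in>UNIV. d i * y $ i) + real CARD('n) * a - 3 * a * (\<Sum>i\<in>UNIV. y $ i * y $ i)) / 2"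
    proof -
      have "(\<Sum>i\<in>UNIV. D2h k y (axis i 1) (axis i 1)) = (\<Sum>i\<in>UNIV. 2 * (d i * y $ i) + a - 3 * a * (y $ i * y $ i)) / 2"
        unfolding D2hi sum_divide_distrib by (rule sum.cong[OF refl]) (simp add: algebra_simps)
      also have "(\<Sum>i\<in>UNIV. 2 * (d i * y $ i) + a - 3 * a * (y $ i * y $ i)) =
          2 * (\<Sum>i\<in>UNIV. d i * y $ i) + real CARD('n) * a - 3 * a * (\<Sum>i\<in>UNIV. y $ i * y $ i)"
        by (simp add: sum.distrib sum_subtractf sum_distrib_left)
      finally show ?thesis .
    qed
    also have "\<dots> = (real CARD('n) - 1) * a / 2" unfolding s_dy s_yy by (simp add: algebra_simps)
    finally show ?thesis .
  qed
  have "(\<Sum>i\<in>UNIV. GDb y (axis i 1) (axis i 1)) =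
        Phi2 (hq k y) * (\<Sum>i\<in>UNIV. Dh k y (axis i 1) * Dh k y (axis i 1)) + Phi1 (hq k y) * (\<Sum>i\<in>UNIV. D2h k y (axis i 1) (axis i 1))"
    unfolding GDb_def by (simp add: sum.distrib sum_distrib_left mult.assoc)
  also have "\<dots> = hq k y * (1 - hq k y) * Phi2 (hq k y) + ((real CARD('n) - 1) / 2) * (1 - 2 * hq k y) * Phi1 (hq k y)"
  proof -
    have gen: "\<And>p q m a. p*((1-a*a)/4) + q*((m-1)*a/2) = (1-a)/2*(1-(1-a)/2)*(p::real) + ((m-1)/2)*(1-2*((1-a)/2))*q"
      by (simp add: field_simps)
    show ?thesis unfolding sq s2 hx by (rule gen)
  qed
  finally show ?thesis .
qed

end



definition zeps :: "real \<Rightarrow> real" where "zeps \<epsilon> = cos ((1 - \<epsilon>) * pi)"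
definition xeps :: "real \<Rightarrow> real" where "xeps \<epsilon> = (1 - zeps \<epsilon>) / 2"

lemma zeps_bounds:
  assumes "0 < \<epsilon>" "\<epsilon> < 1"
  shows "-1 < zeps \<epsilon>" "zeps \<epsilon> < 1" "0 < xeps \<epsilon>" "xeps \<epsilon> < 1"
proof -
  have z: "zeps \<epsilon> = - cos (\<epsilon> * pi)" unfolding zeps_def by (simp add: algebra_simps)
  have "cos (\<epsilon> * pi) < cos 0" using assms by (intro cos_monotone_0_pi) auto
  moreover have "cos pi < cos (\<epsilon> * pi)" using assms by (intro cos_monotone_0_pi) auto
  ultimately have "cos (\<epsilon> * pi) < 1" "-1 < cos (\<epsilon> * pi)" by auto
  then show "-1 < zeps \<epsilon>" "zeps \<epsilon> < 1" "0 < xeps \<epsilon>" "xeps \<epsilon> < 1"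
    unfolding xeps_def z by auto
qed

lemma sum_sq_norm: "(\<Sum>i\<in>UNIV. ((x::real^'n) $ i)^2) = 1 \<longleftrightarrow> norm x = 1"
  by (simp add: norm_eq_1 inner_vec_def power2_eq_square)

lemma cap_eq:
  fixes k :: "'n::finite"
  shows "spherical_cap k \<epsilon> = {x. norm x = 1 \<and> zeps \<epsilon> < x $ k}"
proof -
  have le: "norm x = 1 \<Longrightarrow> x $ k \<le> 1" for x :: "real^'n"
    using component_le_norm_cart[of x k] by simp
  show ?thesis
  proof (rule set_eqI)
    fix x :: "real^'n"
    show "x \<in> spherical_cap k \<epsilon> \<longleftrightarrow> x \<in> {x. norm x = 1 \<and> zeps \<epsilon> < x $ k}"
      unfolding spherical_cap_def mem_Collect_eq sum_sq_norm zeps_def using le[of x] by blast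
  qed
qed

lemma cone_eq:
  fixes k :: "'n::finite"
  shows "cone_over (spherical_cap k \<epsilon>) = {y. zeps \<epsilon> * norm y < y $ k}"
proof -
  have "y \<noteq> 0 \<and> zeps \<epsilon> < y $ k / norm y \<longleftrightarrow> zeps \<epsilon> * norm y < y $ k" for y :: "real^'n"
  proof (cases "y = 0")
    case True then show ?thesis by simp
  next
    case False then have "norm y > 0" by simp
    then show ?thesis using False by (simp add: pos_less_divide_eq)
  qed
  note eq = this
  show ?thesis
  proof (rule set_eqI)
    fix y :: "real^'n"
    have "(y /\<^sub>R norm y) $ k = y $ k / norm y" by (simp add: divide_inverse_commute)
    moreover have "y \<noteq> 0 \<Longrightarrow> norm (y /\<^sub>R norm y) = 1" by simp
    ultimately show "y \<in> cone_over (spherical_cap k \<epsilon>) \<longleftrightarrow> y \<in> {y. zeps \<epsilon> * norm y < y $ k}"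
      unfolding cone_over_def cap_eq mem_Collect_eq using eq[of y] by auto
  qed
qed

lemma cone_open:
  fixes k :: "'n::finite"
  shows "open (cone_over (spherical_cap k \<epsilon>))"
  unfolding cone_eq by (intro open_Collect_less continuous_intros)

lemma cap_sphere:
  fixes k :: "'n::finite"
  shows "\<forall>x\<in>spherical_cap k \<epsilon>. norm x = 1"
  unfolding cap_eq by auto

lemma hq_cone:
  fixes k :: "'n::finite"
  assumes e: "0 < \<epsilon>" "\<epsilon> < 1" and y: "y \<in> cone_over (spherical_cap k \<epsilon>)"
  shows "y \<noteq> 0" "0 \<le> hq k y" "hq k y < xeps \<epsilon>" "hq k y \<in> {-1<..<1}"
proof -
  from y have y0: "y \<noteq> 0" and yv: "y /\<^sub>R norm y \<in> spherical_cap k \<epsilon>" unfolding cone_over_def by auto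
  then have "zeps \<epsilon> < y $ k * rho y" unfolding cap_eq rho_def by (simp add: mult.commute)
  moreover have "y $ k * rho y \<le> 1"
  proof -
    have "\<bar>y $ k\<bar> \<le> norm y" by (rule component_le_norm_cart)
    then show ?thesis unfolding rho_def using y0 by (simp add: field_simps)
  qed
  ultimately show "y \<noteq> 0" "0 \<le> hq k y" "hq k y < xeps \<epsilon>" using y0 unfolding hq_def xeps_def by auto
  then show "hq k y \<in> {-1<..<1}" using zeps_bounds[OF e] by auto
qed

lemma hom0_cap:
  fixes k :: "'n::finite"
  assumes y: "y \<in> cone_over (spherical_cap k \<epsilon>)"
  shows "hom0_ext (\<lambda>x. if x \<in> spherical_cap k \<epsilon> then Phi ((1 - x $ k) / 2) else 0) y = Phi (hq k y)"
proof -
  from y have y0: "y \<noteq> 0" and yv: "y /\<^sub>R norm y \<in> spherical_cap k \<epsilon>" unfolding cone_over_def by auto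
  then show ?thesis unfolding hom0_ext_def hq_def rho_def by (simp add: mult.commute)
qed

lemma closure_cap:
  fixes k :: "'n::finite"
  shows "closure (spherical_cap k \<epsilon>) \<subseteq> {x. norm x = 1 \<and> zeps \<epsilon> \<le> x $ k}"
proof (rule closure_minimal)
  show "spherical_cap k \<epsilon> \<subseteq> {x. norm x = 1 \<and> zeps \<epsilon> \<le> x $ k}" unfolding cap_eq by auto
  show "closed {x :: real^'n. norm x = 1 \<and> zeps \<epsilon> \<le> x $ k}"
    by (intro closed_Collect_conj closed_Collect_eq closed_Collect_le continuous_intros)
qed

context
  fixes k :: "'n::finite" and \<epsilon> :: real and Phi Phi1 Phi2 :: "real \<Rightarrow> real"
  assumes e: "0 < \<epsilon>" "\<epsilon> < 1"
  and d1: "\<And>x. x \<in> {-1<..<1} \<Longrightarrow> (Phi has_field_derivative Phi1 x) (at x)"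
  and d2: "\<And>x. x \<in> {-1<..<1} \<Longrightarrow> (Phi1 has_field_derivative Phi2 x) (at x)"
  and c2: "continuous_on {-1<..<1} Phi2"
  and bd: "Phi (xeps \<epsilon>) = 0"
begin

definition ufun :: "real^'n \<Rightarrow> real" where
  "ufun x = (if x \<in> spherical_cap k \<epsilon> then Phi ((1 - x $ k) / 2) else 0)"

lemma hq_in: "y \<in> cone_over (spherical_cap k \<epsilon>) \<Longrightarrow> y \<noteq> 0 \<and> hq k y \<in> {-1<..<1}"
  using hq_cone(1,4)[OF e, of y k] by blast

lemma u_d1: "y \<in> cone_over (spherical_cap k \<epsilon>) \<Longrightarrow> (hom0_ext ufun has_derivative GDa k Phi1 y) (at y)"
  apply (rule has_derivative_transform_within_open[OF G_d1[OF d1 d2 c2] cone_open])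
  using hq_in hom0_cap[of _ k \<epsilon> Phi] unfolding ufun_def[abs_def] by auto

lemma u_d2: "y \<in> cone_over (spherical_cap k \<epsilon>) \<Longrightarrow> ((\<lambda>y. GDa k Phi1 y b) has_derivative GDb k Phi1 Phi2 y b) (at y)"
  using hq_in by (intro G_d2[OF d1 d2 c2]) auto

lemma u_C2: "C2_on (cone_over (spherical_cap k \<epsilon>)) (hom0_ext ufun)"
  by (rule C2_from_partials[OF cone_open u_d1 u_d2 G_c2[OF d1 d2 c2]]) (use hq_in in auto)

lemma u_lap:
  assumes x: "x \<in> spherical_cap k \<epsilon>"
  shows "sphere_laplacian ufun x = ((1 - x $ k) / 2) * (1 - (1 - x $ k) / 2) * Phi2 ((1 - x $ k) / 2)
        + ((real CARD('n) - 1) / 2) * (1 - 2 * ((1 - x $ k) / 2)) * Phi1 ((1 - x $ k) / 2)"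
proof -
  have n1: "norm x = 1" using x cap_sphere by blast
  have xc: "x \<in> cone_over (spherical_cap k \<epsilon>)" using in_cone[OF x n1] .
  have "sphere_laplacian ufun x = (\<Sum>i\<in>UNIV. GDb k Phi1 Phi2 x (axis i 1) (axis i 1))"
    unfolding sphere_laplacian_def by (rule lap_partials[OF cone_open xc u_d1 u_d2])
  also have "\<dots> = hq k x * (1 - hq k x) * Phi2 (hq k x) + ((real CARD('n) - 1) / 2) * (1 - 2 * hq k x) * Phi1 (hq k x)"
    by (rule G_lap[OF d1 d2 c2 n1])
  also have "hq k x = (1 - x $ k) / 2" unfolding hq_def rho_def n1 by simp
  finally show ?thesis .
qed

lemma u_cont: "continuous_on (closure (spherical_cap k \<epsilon>)) ufun"
proof -
  have Phic: "continuous_on {-1<..<1} Phi"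
    by (intro continuous_at_imp_continuous_on ballI DERIV_isCont[OF d1]) auto
  have eq: "ufun x = Phi ((1 - x $ k) / 2)" if "x \<in> closure (spherical_cap k \<epsilon>)" for x
  proof (cases "x \<in> spherical_cap k \<epsilon>")
    case True then show ?thesis unfolding ufun_def by simp
  next
    case False
    have "norm x = 1" "zeps \<epsilon> \<le> x $ k" using closure_cap that by auto
    with False have "x $ k = zeps \<epsilon>" unfolding cap_eq by auto
    then show ?thesis unfolding ufun_def using False bd by (simp add: xeps_def)
  qed
  have rng: "(1 - x $ k) / 2 \<in> {-1<..<1}" if "x \<in> closure (spherical_cap k \<epsilon>)" for x
  proof -
    have "norm x = 1" "zeps \<epsilon> \<le> x $ k" using closure_cap that by auto
    moreover have "\<bar>x $ k\<bar> \<le> norm x" by (rule component_le_norm_cart)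
    ultimately show ?thesis using zeps_bounds[OF e] by auto
  qed
  have "continuous_on (closure (spherical_cap k \<epsilon>)) (\<lambda>x. Phi ((1 - x $ k) / 2))"
    by (rule continuous_on_compose2[OF Phic]) (use rng in \<open>auto intro!: continuous_intros\<close>)
  then show ?thesis using eq continuous_on_cong by (metis (no_types, lifting))
qed

lemma u_zero: "x \<notin> spherical_cap k \<epsilon> \<Longrightarrow> ufun x = 0"
  unfolding ufun_def by simp

end



lemma le_of_scaled:
  fixes a b :: real
  assumes "\<And>c. c > 1 \<Longrightarrow> a \<le> c * b"
  shows "a \<le> b"
proof (rule ccontr)
  assume "\<not> a \<le> b"
  then have ab: "a > b" by simp
  show False
  proof (cases "b \<le> 0")
    case True
    then have "2 * b \<le> b" by simp
    with assms[of 2] ab show False by simp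
  next
    case False
    define c where "c = 1 + (a - b) / (2 * b)"
    have "c > 1" using False ab unfolding c_def by simp
    moreover have "c * b = b + (a - b) / 2" using False unfolding c_def by (simp add: field_simps)
    ultimately have "a \<le> b + (a - b) / 2" using assms[of c] by simp
    with ab show False by (simp add: field_simps)
  qed
qed

context
  fixes \<Omega> :: "(real^'n) set" and w :: "real^'n \<Rightarrow> real" and T :: real
  assumes sph: "\<forall>x\<in>\<Omega>. norm x = 1" and op: "open (cone_over \<Omega>)"
  and wC2: "C2_on (cone_over \<Omega>) (hom0_ext w)" and wc: "continuous_on (closure \<Omega>) w"
  and wz: "\<And>x. x \<notin> \<Omega> \<Longrightarrow> w x = 0" and wl: "\<And>x. x \<in> \<Omega> \<Longrightarrow> sphere_laplacian w x = -1"
  and wT: "\<And>x. w x \<le> T" and Tpos: "T > 0"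
begin

lemma SLw_scaled: "x \<in> \<Omega> \<Longrightarrow> sphere_laplacian (\<lambda>x. c * w x) x = - c"
  using SL_scale[OF op in_cone[of x \<Omega>] wC2, of c] sph wl by auto

lemma uniq:
  assumes uC2: "C2_on (cone_over \<Omega>) (hom0_ext u)" and uc: "continuous_on (closure \<Omega>) u"
  and uz: "\<And>x. x \<notin> \<Omega> \<Longrightarrow> u x = 0" and ul: "\<And>x. x \<in> \<Omega> \<Longrightarrow> sphere_laplacian u x = -1"
  shows "u = w"
proof
  fix x
  have "u x \<le> c * w x" if c: "c > 1" for c
    by (rule cmp[OF sph op uC2 C2_scale[OF wC2] uc continuous_on_mult[OF continuous_on_const wc]])
       (use uz wz ul SLw_scaled c in auto)
  then have "u x \<le> w x" by (rule le_of_scaled)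
  moreover
  have SLu_scaled: "x \<in> \<Omega> \<Longrightarrow> sphere_laplacian (\<lambda>x. c * u x) x = - c" for x c
    using SL_scale[OF op in_cone[of x \<Omega>] uC2, of c] sph ul by auto
  have "w x \<le> c * u x" if c: "c > 1" for c
    by (rule cmp[OF sph op wC2 C2_scale[OF uC2] wc continuous_on_mult[OF continuous_on_const uc]])
       (use uz wz wl SLu_scaled c in auto)
  then have "w x \<le> u x" by (rule le_of_scaled)
  ultimately show "u x = w x" by simp
qed

lemma eig_pos:
  assumes uC2: "C2_on (cone_over \<Omega>) (hom0_ext u)" and uc: "continuous_on (closure \<Omega>) u"
  and uz: "\<And>x. x \<notin> \<Omega> \<Longrightarrow> u x = 0" and ul: "\<And>x. x \<in> \<Omega> \<Longrightarrow> - sphere_laplacian u x = \<mu> * u x"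
  and x1: "x1 \<in> \<Omega>" "u x1 > 0"
  shows "1 \<le> \<mu> * T"
proof -
  have ne: "closure \<Omega> \<noteq> {}" using x1 by auto
  obtain p where p: "p \<in> closure \<Omega>" "\<And>y. y \<in> closure \<Omega> \<Longrightarrow> u y \<le> u p"
    using continuous_attains_sup[OF closure_sphere_compact[OF sph] ne uc] by blast
  have up: "u p \<ge> u x1" using p(2) x1(1) closure_subset by blast
  then have Mpos: "u p > 0" using x1 by simp
  then have pO: "p \<in> \<Omega>" using uz by force
  have ule: "\<And>y. y \<in> \<Omega> \<Longrightarrow> u y \<le> u p" using p(2) closure_subset by blast
  have "sphere_laplacian u p \<le> sphere_laplacian (\<lambda>x. 0 * w x) p"
    by (rule lmax[OF sph op pO uC2 C2_scale[OF wC2]]) (use ule in auto)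
  then have "- (\<mu> * u p) \<le> 0" using ul[OF pO] SLw_scaled[OF pO, of 0] by simp
  then have mu0: "\<mu> \<ge> 0" using Mpos by (simp add: zero_le_mult_iff)
  have key: "u p \<le> (\<mu> * u p + \<delta>) * T" if d: "\<delta> > 0" for \<delta>
  proof -
    define t where "t = \<mu> * u p + \<delta>"
    have "\<mu> * u p \<ge> 0" using mu0 Mpos by simp
    then have t0: "t > 0" unfolding t_def using d by simp
    have "u p \<le> t * w p"
    proof (rule cmp[OF sph op uC2 C2_scale[OF wC2] uc continuous_on_mult[OF continuous_on_const wc]])
      show "\<And>x. x \<notin> \<Omega> \<Longrightarrow> u x = 0 \<and> t * w x = 0" using uz wz by simp
      fix x assume x: "x \<in> \<Omega>"
      have "\<mu> * u x \<le> \<mu> * u p" using mu0 ule[OF x] by (simp add: mult_left_mono)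
      then show "sphere_laplacian (\<lambda>x. t * w x) x < sphere_laplacian u x"
        using ul[OF x] SLw_scaled[OF x, of t] d unfolding t_def by simp
    qed
    also have "\<dots> \<le> t * T" using t0 wT by (simp add: mult_left_mono)
    finally show ?thesis unfolding t_def .
  qed
  have "u p \<le> \<mu> * u p * T"
  proof (rule field_le_epsilon)
    fix e :: real assume e: "e > 0"
    have "u p \<le> (\<mu> * u p + e / T) * T" using key[of "e / T"] e Tpos by simp
    also have "\<dots> = \<mu> * u p * T + e" using Tpos by (simp add: field_simps)
    finally show "u p \<le> \<mu> * u p * T + e" .
  qed
  then have "u p * 1 \<le> u p * (\<mu> * T)" by (simp add: algebra_simps)
  then show ?thesis using Mpos by (simp add: mult_le_cancel_left_pos)
qed

lemma eig_lower:
  assumes "dirichlet_eigenvalue \<Omega> \<mu>"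
  shows "1 \<le> \<mu> * T"
proof -
  from assms obtain u x1 where u: "dirichlet_sol \<Omega> (\<lambda>s. \<mu> * s) u" and x1: "x1 \<in> \<Omega>" "u x1 \<noteq> 0"
    unfolding dirichlet_eigenvalue_def by blast
  from u have uC2: "C2_on (cone_over \<Omega>) (hom0_ext u)" and uc: "continuous_on (closure \<Omega>) u"
    and ul: "\<And>x. x \<in> \<Omega> \<Longrightarrow> - sphere_laplacian u x = \<mu> * u x" and uz: "\<And>x. x \<notin> \<Omega> \<Longrightarrow> u x = 0"
    unfolding dirichlet_sol_def by auto
  show ?thesis
  proof (cases "u x1 > 0")
    case True
    show ?thesis by (rule eig_pos[OF uC2 uc uz ul x1(1) True])
  next
    case False
    then have neg: "(-1) * u x1 > 0" using x1 by simp
    have ul': "- sphere_laplacian (\<lambda>x. (-1) * u x) x = \<mu> * ((-1) * u x)" if x: "x \<in> \<Omega>" for x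
      using SL_scale[OF op in_cone[of x \<Omega>] uC2, of "-1"] sph x ul[OF x] by auto
    show ?thesis
      by (rule eig_pos[OF C2_scale[OF uC2] continuous_on_mult[OF continuous_on_const uc] _ ul' x1(1) neg])
         (use uz in simp)
  qed
qed

end



lemma E_zero: "E N l 0 = 0"
  unfolding E_def by simp

lemma E_nonneg_mono:
  assumes N: "N \<ge> 2" and t: "0 \<le> t" "t \<le> s" "s < 1"
  shows "0 \<le> E N 0 t" "E N 0 t \<le> E N 0 s"
proof -
  have d0: "0 \<le> ec N 0 n" for n using ec_abs_le[OF N, of 0 n] by simp
  have st: "summable (\<lambda>n. ec N 0 n * t ^ n)" using sum0[OF N, of 0 t] t by simp
  have ss: "summable (\<lambda>n. ec N 0 n * s ^ n)" using sum0[OF N, of 0 s] t by simp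
  show "0 \<le> E N 0 t" unfolding E_def using d0 t by (intro suminf_nonneg st) simp
  show "E N 0 t \<le> E N 0 s" unfolding E_def
    using d0 t by (intro suminf_le st ss mult_left_mono power_mono) auto
qed

context
  fixes k :: "'n::finite" and \<epsilon> N :: real
  assumes card: "CARD('n) \<ge> 3" and e: "0 < \<epsilon>" "\<epsilon> < 1"
  and NN: "N = real CARD('n) - 1"
  and big: "E N 0 (xeps \<epsilon>) > 4"
begin

lemma N2: "N \<ge> 2" using card NN by simp

definition PT :: "real \<Rightarrow> real" where "PT t = E N 0 (xeps \<epsilon>) - E N 0 t"

lemma dT1: "t \<in> {-1<..<1} \<Longrightarrow> (PT has_field_derivative (- E1 N 0 t)) (at t)"
  unfolding PT_def[abs_def] using E_deriv[OF N2, of 0 t] by (auto intro!: derivative_eq_intros)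

lemma dT2: "t \<in> {-1<..<1} \<Longrightarrow> ((\<lambda>t. - E1 N 0 t) has_field_derivative (- E2 N 0 t)) (at t)"
  using E1_deriv[OF N2, of 0 t] by (auto intro!: derivative_eq_intros)

lemma cT2: "continuous_on {-1<..<1} (\<lambda>t. - E2 N 0 t)"
  using E2_cont[OF N2, of 0] by (intro continuous_intros) auto

lemma bdT: "PT (xeps \<epsilon>) = 0" unfolding PT_def by simp

definition wT :: "real^'n \<Rightarrow> real" where "wT = ufun k \<epsilon> PT"

lemma wT_C2: "C2_on (cone_over (spherical_cap k \<epsilon>)) (hom0_ext wT)"
  unfolding wT_def by (rule u_C2[OF e dT1 dT2 cT2 bdT])

lemma wT_cont: "continuous_on (closure (spherical_cap k \<epsilon>)) wT"
  unfolding wT_def by (rule u_cont[OF e dT1 dT2 cT2 bdT])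

lemma wT_zero: "x \<notin> spherical_cap k \<epsilon> \<Longrightarrow> wT x = 0"
  unfolding wT_def by (rule u_zero[OF e dT1 dT2 cT2 bdT])

lemma t_range:
  assumes x: "x \<in> spherical_cap k \<epsilon>"
  shows "0 \<le> (1 - x $ k) / 2" "(1 - x $ k) / 2 < xeps \<epsilon>" "\<bar>(1 - x $ k) / 2\<bar> < 1"
proof -
  have "norm x = 1" "zeps \<epsilon> < x $ k" using x unfolding cap_eq by auto
  moreover have "\<bar>x $ k\<bar> \<le> norm x" by (rule component_le_norm_cart)
  ultimately show "0 \<le> (1 - x $ k) / 2" "(1 - x $ k) / 2 < xeps \<epsilon>" "\<bar>(1 - x $ k) / 2\<bar> < 1"
    using zeps_bounds[OF e] unfolding xeps_def by auto
qed

lemma wT_lap: "x \<in> spherical_cap k \<epsilon> \<Longrightarrow> sphere_laplacian wT x = -1"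
proof -
  assume x: "x \<in> spherical_cap k \<epsilon>"
  define t where "t = (1 - x $ k) / 2"
  have t1: "\<bar>t\<bar> < 1" using t_range[OF x] unfolding t_def by simp
  have "sphere_laplacian wT x = t * (1 - t) * (- E2 N 0 t) + ((real CARD('n) - 1) / 2) * (1 - 2 * t) * (- E1 N 0 t)"
    unfolding wT_def t_def by (rule u_lap[OF e dT1 dT2 cT2 bdT x])
  also have "\<dots> = - (t * (1 - t) * E2 N 0 t + (N / 2) * (1 - 2 * t) * E1 N 0 t)"
  proof -
    have "(real CARD('n) - 1) / 2 = N / 2" using NN by simp
    then show ?thesis by (simp only:)
  qed
  also have "\<dots> = -1" using E_ode[OF N2 _ _ t1, of 0] by simp
  finally show ?thesis .
qed

lemma wT_val: "x \<in> spherical_cap k \<epsilon> \<Longrightarrow> wT x = E N 0 (xeps \<epsilon>) - E N 0 ((1 - x $ k) / 2)"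
  unfolding wT_def by (subst ufun_def[OF e dT1 dT2 cT2 bdT]) (auto simp: PT_def)

lemma wT_bounds: "0 \<le> wT x" "wT x \<le> E N 0 (xeps \<epsilon>)"
proof -
  have "0 \<le> wT x \<and> wT x \<le> E N 0 (xeps \<epsilon>)"
  proof (cases "x \<in> spherical_cap k \<epsilon>")
    case True
    note tr = t_range[OF True]
    have "0 \<le> E N 0 ((1 - x $ k) / 2)" "E N 0 ((1 - x $ k) / 2) \<le> E N 0 (xeps \<epsilon>)"
      using E_nonneg_mono[OF N2 tr(1) less_imp_le[OF tr(2)]] zeps_bounds[OF e] by auto
    then show ?thesis using wT_val[OF True] by simp
  next
    case False
    have "0 \<le> E N 0 (xeps \<epsilon>)" using E_nonneg_mono[OF N2, of 0 "xeps \<epsilon>"] zeps_bounds[OF e] by auto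
    then show ?thesis using wT_zero[OF False] by simp
  qed
  then show "0 \<le> wT x" "wT x \<le> E N 0 (xeps \<epsilon>)" by auto
qed

lemma pole: "axis k 1 \<in> spherical_cap k \<epsilon>"
  unfolding cap_eq using zeps_bounds[OF e] by simp

lemma wT_pole: "wT (axis k 1) = E N 0 (xeps \<epsilon>)"
  using wT_val[OF pole] by (simp add: E_zero)

lemma wT_sol: "dirichlet_sol (spherical_cap k \<epsilon>) (\<lambda>_. 1) wT"
  unfolding dirichlet_sol_def using wT_C2 wT_cont wT_lap wT_zero by auto

lemma torsion_eq: "torsion_function (spherical_cap k \<epsilon>) = wT"
  unfolding torsion_function_def
proof (rule the_equality)
  show "dirichlet_sol (spherical_cap k \<epsilon>) (\<lambda>_. 1) wT" by (rule wT_sol)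
  fix u assume "dirichlet_sol (spherical_cap k \<epsilon>) (\<lambda>_. 1) u"
  then have uC2: "C2_on (cone_over (spherical_cap k \<epsilon>)) (hom0_ext u)" and uc: "continuous_on (closure (spherical_cap k \<epsilon>)) u"
    and ul: "\<And>x. x \<in> spherical_cap k \<epsilon> \<Longrightarrow> sphere_laplacian u x = -1" and uz: "\<And>x. x \<notin> spherical_cap k \<epsilon> \<Longrightarrow> u x = 0"
    unfolding dirichlet_sol_def by auto
  show "u = wT"
    by (rule uniq[OF cap_sphere cone_open wT_C2 wT_cont wT_zero wT_lap wT_bounds(2) _ uC2 uc uz ul])
       (use big in auto)
qed

lemma sup_eq: "sup_norm_on (spherical_cap k \<epsilon>) wT = E N 0 (xeps \<epsilon>)"
  unfolding sup_norm_on_def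
proof (rule cSup_eq_maximum)
  show "E N 0 (xeps \<epsilon>) \<in> (\<lambda>x. \<bar>wT x\<bar>) ` spherical_cap k \<epsilon>"
    using pole wT_pole big by (auto intro!: image_eqI[of _ _ "axis k 1"])
  show "\<And>y. y \<in> (\<lambda>x. \<bar>wT x\<bar>) ` spherical_cap k \<epsilon> \<Longrightarrow> y \<le> E N 0 (xeps \<epsilon>)"
    using wT_bounds by auto
qed

lemma eig_lower_cap: "dirichlet_eigenvalue (spherical_cap k \<epsilon>) \<mu> \<Longrightarrow> 1 \<le> \<mu> * E N 0 (xeps \<epsilon>)"
  by (rule eig_lower[OF cap_sphere cone_open wT_C2 wT_cont wT_zero wT_lap wT_bounds(2)]) (use big in auto)

end



lemma ec_cont: "continuous_on UNIV (\<lambda>l. ec N l n)"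
proof (induction n rule: less_induct)
  case (less n)
  show ?case
  proof (cases n)
    case 0 then show ?thesis by simp
  next
    case (Suc m)
    show ?thesis
    proof (cases m)
      case 0 then show ?thesis using Suc by simp
    next
      case (Suc j)
      have "continuous_on UNIV (\<lambda>l. ec N l (Suc j))" using less \<open>n = Suc m\<close> Suc by simp
      then have "continuous_on UNIV (\<lambda>l. (real (Suc j) * (real (Suc j) + N - 1) - l) * inverse ((real (Suc j) + 1) * (real (Suc j) + N / 2)) * ec N l (Suc j))"
        by (intro continuous_on_mult continuous_on_diff continuous_on_const continuous_on_id)
      then show ?thesis using \<open>n = Suc m\<close> Suc by (simp only: ec.simps divide_inverse)
    qed
  qed
qed

lemma E_cont_l:
  assumes N: "N \<ge> 2" and X: "0 \<le> X" "X < 1"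
  shows "continuous_on {0..1} (\<lambda>l. E N l X)"
  unfolding E_def
proof (rule uniform_limit_theorem)
  show "\<forall>\<^sub>F n in sequentially. continuous_on {0..1} (\<lambda>l. \<Sum>i<n. ec N l i * X ^ i)"
    by (intro always_eventually allI continuous_intros continuous_on_subset[OF ec_cont]) auto
  show "uniform_limit {0..1} (\<lambda>n l. \<Sum>i<n. ec N l i * X ^ i) (\<lambda>l. \<Sum>i. ec N l i * X ^ i) sequentially"
  proof (rule Weierstrass_m_test)
    fix n and l :: real assume "l \<in> {0..1}"
    then show "norm (ec N l n * X ^ n) \<le> ec N 0 n * X ^ n"
      using ec_abs_le[OF N, of l n] X by (auto simp: abs_mult intro!: mult_right_mono)
  next
    show "summable (\<lambda>n. ec N 0 n * X ^ n)" by (rule d_summable[OF N X])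
  qed
qed simp

lemma E_lower_l:
  assumes N: "N \<ge> 2" and l: "0 \<le> l" "l \<le> 1" and X: "0 \<le> X" "X < 1"
  shows "(1 - l) * E N 0 X \<le> E N l X"
proof -
  have s0: "summable (\<lambda>n. ec N 0 n * X ^ n)" using sum0[OF N, of 0 X] X by simp
  have sl: "summable (\<lambda>n. ec N l n * X ^ n)" using sum0[OF N l, of X] X by simp
  have "(1 - l) * E N 0 X = (\<Sum>n. (1 - l) * (ec N 0 n * X ^ n))"
    unfolding E_def by (rule suminf_mult[OF s0, symmetric])
  also have "\<dots> \<le> E N l X" unfolding E_def
  proof (rule suminf_le[OF _ summable_mult[OF s0] sl])
    fix n
    show "(1 - l) * (ec N 0 n * X ^ n) \<le> ec N l n * X ^ n"
    proof (cases "n = 0")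
      case True then show ?thesis by simp
    next
      case False
      then have n: "n \<ge> 1" by simp
      from ec_bounds[OF N l n] have b: "(1 - l + l / n) * ec N 0 n \<le> ec N l n" "0 < ec N 0 n" by auto
      have "(1 - l) * ec N 0 n \<le> (1 - l + l / n) * ec N 0 n"
        using b(2) l by (intro mult_right_mono) auto
      then have "(1 - l) * ec N 0 n \<le> ec N l n" using b(1) by simp
      then show ?thesis using X by (simp add: mult.assoc[symmetric] mult_right_mono)
    qed
  qed
  finally show ?thesis .
qed

lemma not_summable_d:
  assumes N: "N \<ge> 2"
  shows "\<not> summable (\<lambda>n. ec N 0 n)"
proof
  assume "summable (\<lambda>n. ec N 0 n)"
  then have s: "summable (\<lambda>n. (N / 2) * ec N 0 n)" by (rule summable_mult)
  have "summable (\<lambda>n. inverse (real n))"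
  proof (rule summable_comparison_test[OF _ s])
    show "\<exists>M. \<forall>n\<ge>M. norm (inverse (real n)) \<le> N / 2 * ec N 0 n"
    proof (intro exI allI impI)
      fix n :: nat assume "1 \<le> n"
      have "2 / (N * real n) \<le> ec N 0 n" by (rule d_lower[OF N \<open>1 \<le> n\<close>])
      then have "N / 2 * (2 / (N * real n)) \<le> N / 2 * ec N 0 n" using N by (intro mult_left_mono) auto
      moreover have "N / 2 * (2 / (N * real n)) = inverse (real n)" using N \<open>1 \<le> n\<close> by (simp add: field_simps)
      ultimately show "norm (inverse (real n)) \<le> N / 2 * ec N 0 n" by simp
    qed
  qed
  then show False using not_summable_harmonic[where 'a = real] by simp
qed

lemma big_eventually:
  assumes N: "N \<ge> 2"
  shows "\<exists>\<epsilon>0>0. \<epsilon>0 \<le> 1 \<and> (\<forall>\<epsilon>. 0 < \<epsilon> \<and> \<epsilon> < \<epsilon>0 \<longrightarrow> E N 0 (xeps \<epsilon>) > 4)"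
proof -
  have d0: "0 \<le> ec N 0 n" for n using ec_abs_le[OF N, of 0 n] by simp
  have "\<exists>M. (\<Sum>i<M. ec N 0 i) > 5"
  proof (rule ccontr)
    assume "\<not> (\<exists>M. (\<Sum>i<M. ec N 0 i) > 5)"
    then have "\<And>M. (\<Sum>i<M. ec N 0 i) \<le> 5" by (simp add: not_less)
    then have "summable (\<lambda>n. ec N 0 n)" by (intro summableI_nonneg_bounded[where x = 5] d0)
    then show False using not_summable_d[OF N] by simp
  qed
  then obtain M where M: "(\<Sum>i<M. ec N 0 i) > 5" by blast
  define P where "P x = (\<Sum>i<M. ec N 0 i * x ^ i)" for x :: real
  have "isCont P 1" unfolding P_def by (intro continuous_intros)
  then have "(P \<longlongrightarrow> P 1) (nhds 1)" by (simp add: isCont_def tendsto_nhds_iff)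
  moreover have "P 1 > 4" using M unfolding P_def by simp
  ultimately have "\<forall>\<^sub>F x in nhds 1. P x > 4" by (rule order_tendstoD(1))
  then obtain d where d: "d > 0" "\<And>x. dist x 1 < d \<Longrightarrow> P x > 4"
    unfolding eventually_nhds_metric by auto
  have xc: "isCont xeps 0" unfolding xeps_def zeps_def by (auto intro!: continuous_intros)
  have x0: "xeps 0 = 1" unfolding xeps_def zeps_def by simp
  from LIM_D[OF xc[unfolded isCont_def] d(1)] obtain s where s: "s > 0"
    "\<And>x. x \<noteq> 0 \<and> norm (x - 0) < s \<longrightarrow> norm (xeps x - xeps 0) < d" by blast
  show ?thesis
  proof (intro exI[of _ "min s 1"] conjI allI impI)
    show "0 < min s 1" using s by simp
    show "min s 1 \<le> 1" by simp
    fix \<epsilon> :: real assume e: "0 < \<epsilon> \<and> \<epsilon> < min s 1"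
    then have "norm (xeps \<epsilon> - 1) < d" using s(2)[of \<epsilon>] x0 by simp
    then have "P (xeps \<epsilon>) > 4" using d(2) by (simp add: dist_real_def)
    moreover have "P (xeps \<epsilon>) \<le> E N 0 (xeps \<epsilon>)"
    proof -
      have xb: "0 < xeps \<epsilon>" "xeps \<epsilon> < 1" using zeps_bounds[of \<epsilon>] e by auto
      show ?thesis unfolding P_def E_def
        by (rule sum_le_suminf) (use d0 xb sum0[OF N, of 0 "xeps \<epsilon>"] in auto)
    qed
    ultimately show "E N 0 (xeps \<epsilon>) > 4" by simp
  qed
qed



context
  fixes k :: "'n::finite" and \<epsilon> N :: real
  assumes card: "CARD('n) \<ge> 3" and e: "0 < \<epsilon>" "\<epsilon> < 1"
  and NN: "N = real CARD('n) - 1"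
  and big: "E N 0 (xeps \<epsilon>) > 4"
begin

lemma N2': "N \<ge> 2" using card NN by simp

lemma eig_exists: "\<exists>l. 0 < l \<and> l \<le> 1 / (E N 0 (xeps \<epsilon>) - 2) \<and> dirichlet_eigenvalue (spherical_cap k \<epsilon>) l"
proof -
  define E0 where "E0 = E N 0 (xeps \<epsilon>)"
  define X where "X = xeps \<epsilon>"
  define lam where "lam = 1 / (E0 - 2)"
  have E04: "E0 > 4" using big unfolding E0_def .
  have lam0: "0 < lam" "lam \<le> 1" unfolding lam_def using E04 by (auto simp: field_simps)
  have X: "0 < X" "X < 1" using zeps_bounds[OF e] unfolding X_def by auto
  define f where "f l = 1 - l * E N l X" for l
  have fc: "continuous_on {0..lam} f"
    unfolding f_def
    by (intro continuous_intros continuous_on_subset[OF E_cont_l[OF N2']]) (use X lam0 in auto)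
  have f0: "f 0 = 1" unfolding f_def by simp
  have flam: "f lam \<le> 0"
  proof -
    have "(1 - lam) * E0 \<le> E N lam X" unfolding E0_def X_def[symmetric]
      by (rule E_lower_l[OF N2']) (use lam0 X in auto)
    then have "lam * ((1 - lam) * E0) \<le> lam * E N lam X" using lam0 by (intro mult_left_mono) auto
    moreover have "lam * ((1 - lam) * E0) \<ge> 1"
    proof -
      have "lam * ((1 - lam) * E0) = E0 * (E0 - 3) / (E0 - 2)^2"
        unfolding lam_def using E04 by (simp add: field_simps power2_eq_square)
      moreover have "(E0 - 2)^2 \<le> E0 * (E0 - 3)" using E04 by (simp add: power2_eq_square algebra_simps)
      ultimately show ?thesis using E04 by (simp add: le_divide_eq)
    qed
    ultimately show ?thesis unfolding f_def by simp
  qed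
  obtain l0 where l0: "0 \<le> l0" "l0 \<le> lam" "f l0 = 0"
    using IVT2'[of f lam 0 0, OF flam _ _ fc] f0 lam0 by auto
  have l0pos: "0 < l0" using l0 f0 by (cases "l0 = 0") auto
  have l01: "l0 \<le> 1" using l0 lam0 by simp
  define Phi where "Phi t = 1 - l0 * E N l0 t" for t
  define Phi1 where "Phi1 t = - (l0 * E1 N l0 t)" for t
  define Phi2 where "Phi2 t = - (l0 * E2 N l0 t)" for t
  have d1: "(Phi has_field_derivative Phi1 t) (at t)" if "t \<in> {-1<..<1}" for t
    unfolding Phi_def[abs_def] Phi1_def using E_deriv[OF N2' l0(1) l01, of t] that
    by (auto intro!: derivative_eq_intros)
  have d2: "(Phi1 has_field_derivative Phi2 t) (at t)" if "t \<in> {-1<..<1}" for t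
    unfolding Phi1_def[abs_def] Phi2_def using E1_deriv[OF N2' l0(1) l01, of t] that
    by (auto intro!: derivative_eq_intros)
  have c2: "continuous_on {-1<..<1} Phi2"
    unfolding Phi2_def[abs_def] using E2_cont[OF N2' l0(1) l01] by (intro continuous_intros)
  have bd: "Phi (xeps \<epsilon>) = 0" using l0(3) unfolding Phi_def f_def X_def .
  define u where "u = ufun k \<epsilon> Phi"
  have uval: "u x = Phi ((1 - x $ k) / 2)" if "x \<in> spherical_cap k \<epsilon>" for x
    unfolding u_def using that by (subst ufun_def[OF e d1 d2 c2 bd]) auto
  have ul: "- sphere_laplacian u x = l0 * u x" if x: "x \<in> spherical_cap k \<epsilon>" for x
  proof -
    define t where "t = (1 - x $ k) / 2"
    have t1: "\<bar>t\<bar> < 1" using t_range[OF card e NN big x] unfolding t_def by simp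
    have "sphere_laplacian u x = t * (1 - t) * Phi2 t + ((real CARD('n) - 1) / 2) * (1 - 2 * t) * Phi1 t"
      unfolding u_def t_def by (rule u_lap[OF e d1 d2 c2 bd x])
    also have "\<dots> = - l0 * (t * (1 - t) * E2 N l0 t + (N / 2) * (1 - 2 * t) * E1 N l0 t)"
      unfolding Phi1_def Phi2_def NN by (simp add: algebra_simps)
    also have "\<dots> = - l0 * (1 - l0 * E N l0 t)" using E_ode[OF N2' l0(1) l01 t1] by simp
    finally show ?thesis using uval[OF x] unfolding Phi_def t_def by simp
  qed
  have "dirichlet_sol (spherical_cap k \<epsilon>) (\<lambda>s. l0 * s) u"
    unfolding dirichlet_sol_def
  proof (intro conjI ballI allI impI)
    show "C2_on (cone_over (spherical_cap k \<epsilon>)) (hom0_ext u)" unfolding u_def by (rule u_C2[OF e d1 d2 c2 bd])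
    show "continuous_on (closure (spherical_cap k \<epsilon>)) u" unfolding u_def by (rule u_cont[OF e d1 d2 c2 bd])
    show "\<And>x. x \<in> spherical_cap k \<epsilon> \<Longrightarrow> - sphere_laplacian u x = l0 * u x" by (rule ul)
    show "\<And>x. x \<notin> spherical_cap k \<epsilon> \<Longrightarrow> u x = 0" unfolding u_def by (rule u_zero[OF e d1 d2 c2 bd])
  qed
  moreover have "u (axis k 1) \<noteq> 0"
    using uval[OF pole[OF card e NN big]] unfolding Phi_def by (simp add: E_zero)
  ultimately have "dirichlet_eigenvalue (spherical_cap k \<epsilon>) l0"
    unfolding dirichlet_eigenvalue_def using pole[OF card e NN big] by blast
  then show ?thesis using l0pos l0 unfolding lam_def E0_def by blast
qed

lemma main_eps:
  "\<bar>sup_norm_on (spherical_cap k \<epsilon>) (torsion_function (spherical_cap k \<epsilon>))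
     - 1 / principal_eigenvalue (spherical_cap k \<epsilon>)\<bar> \<le> 2"
proof -
  define E0 where "E0 = E N 0 (xeps \<epsilon>)"
  have E04: "E0 > 4" using big unfolding E0_def .
  have sup: "sup_norm_on (spherical_cap k \<epsilon>) (torsion_function (spherical_cap k \<epsilon>)) = E0"
    unfolding torsion_eq[OF card e NN big] sup_eq[OF card e NN big] E0_def ..
  define S where "S = {\<mu>. dirichlet_eigenvalue (spherical_cap k \<epsilon>) \<mu>}"
  obtain l0 where l0: "0 < l0" "l0 \<le> 1 / (E0 - 2)" "l0 \<in> S"
    using eig_exists unfolding S_def E0_def by blast
  have low: "1 / E0 \<le> \<mu>" if "\<mu> \<in> S" for \<mu>
  proof -
    have "1 \<le> \<mu> * E0" using eig_lower_cap[OF card e NN big] that unfolding S_def E0_def by blast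
    then show ?thesis using E04 by (simp add: divide_le_eq)
  qed
  have i1: "1 / E0 \<le> Inf S" using l0(3) low by (intro cInf_greatest) auto
  have i2: "Inf S \<le> l0" using l0(3) low by (intro cInf_lower) (auto simp: bdd_below_def)
  have ip: "Inf S > 0" using i1 E04 by (smt (verit) divide_pos_pos)
  have "1 / Inf S \<le> E0"
  proof -
    have "1 / Inf S \<le> 1 / (1 / E0)" using i1 E04 ip by (intro divide_left_mono) auto
    then show ?thesis by simp
  qed
  moreover have "E0 - 2 \<le> 1 / Inf S"
  proof -
    have "Inf S \<le> 1 / (E0 - 2)" using i2 l0(2) by simp
    then show ?thesis using ip E04 by (simp add: le_divide_eq field_simps)
  qed
  ultimately show ?thesis unfolding sup principal_eigenvalue_def S_def[symmetric] by simp
qed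

end



theorem proposition1p2:
  fixes k :: "'n::finite"
  assumes "CARD('n) \<ge> 3"
  shows "\<exists>C \<epsilon>0. \<epsilon>0 > 0 \<and>
           (\<forall>\<epsilon>. 0 < \<epsilon> \<and> \<epsilon> < \<epsilon>0 \<longrightarrow>
              \<bar>sup_norm_on (spherical_cap k \<epsilon>) (torsion_function (spherical_cap k \<epsilon>))
                 - 1 / principal_eigenvalue (spherical_cap k \<epsilon>)\<bar> \<le> C)"
proof -
  define N where "N = real CARD('n) - 1"
  have N2: "N \<ge> 2" using assms by (simp add: N_def)
  obtain \<epsilon>0 where e0: "\<epsilon>0 > 0" "\<epsilon>0 \<le> 1" and big: "\<And>\<epsilon>. 0 < \<epsilon> \<and> \<epsilon> < \<epsilon>0 \<Longrightarrow> E N 0 (xeps \<epsilon>) > 4"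
    using big_eventually[OF N2] by blast
  show ?thesis
  proof (rule exI[of _ 2], rule exI[of _ \<epsilon>0], intro conjI allI impI)
    show "\<epsilon>0 > 0" by (rule e0(1))
    fix \<epsilon> :: real assume e: "0 < \<epsilon> \<and> \<epsilon> < \<epsilon>0"
    show "\<bar>sup_norm_on (spherical_cap k \<epsilon>) (torsion_function (spherical_cap k \<epsilon>))
                 - 1 / principal_eigenvalue (spherical_cap k \<epsilon>)\<bar> \<le> 2"
      by (rule main_eps[OF assms _ _ N_def big[OF e]]) (use e e0 in auto)
  qed
qed

end
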